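(* Let $X^{(\kappa)}_N$ be a twisted affine type. (1) There is a ring homomorphism $\varphi:\mathcal{Y}(X^{(\kappa)}_N)\to\mathcal{T}(X^{(\kappa)}_N)$ with $\varphi(Y^{(a)}_m(u))=\dfrac{M^{(a)}_m(u)}{T^{(a)}_{m-1}(u)T^{(a)}_{m+1}(u)}$ ($T^{(a)}_0(u)=1$) for all $a\in I_\sigma$, $m\in\mathbb{N}$, $u\in\mathbb{C}_{\kappa_a\hbar}$. (2) There is a ring homomorphism $\psi:\mathcal{T}(X^{(\kappa)}_N)\to\mathcal{Y}(X^{(\kappa)}_N)$ such that $\psi\circ\varphi=\mathrm{id}_{\mathcal{Y}(X^{(\kappa)}_N)}$.
   Context: Fix $\hbar\in\mathbb{C}\setminus2\pi\sqrt{-1}\mathbb{Q}$; $\mathbb{C}_c:=\mathbb{C}/(2\pi\sqrt{-1}/c)\mathbb{Z}$. Types: $A^{(2)}_{2r-1}$ ($r\ge2$), $A^{(2)}_{2r}$ ($r\ge1$), $D^{(2)}_{r+1}$ ($r\ge3$), $E^{(2)}_6$, $D^{(3)}_4$; $\kappa=3$ for $D^{(3)}_4$ and $2$ otherwise; $I_\sigma=\{1,\dots,r\}$ in the first three cases, $\{1,2,3,4\}$ for $E^{(2)}_6$, $\{1,2\}$ for $D^{(3)}_4$. $\kappa_a$: $A^{(2)}_{2r-1}$: $\kappa_a=1$ ($a<r$), $\kappa_r=2$; $A^{(2)}_{2r}$: all $1$; $D^{(2)}_{r+1}$: $\kappa_a=2$ ($a<r$), $\kappa_r=1$; $E^{(2)}_6$: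 $\kappa_1=\kappa_2=1$, $\kappa_3=\kappa_4=2$; $D^{(3)}_4$: $\kappa_1=1$, $\kappa_2=3$. $\Omega=2\pi\sqrt{-1}/(\kappa\hbar)$. $M^{(a)}_m(u)$: $A^{(2)}_{2r-1}$: $T^{(a-1)}_m(u)T^{(a+1)}_m(u)$ ($a\le r-1$), $M^{(r)}_m=T^{(r-1)}_m(u)T^{(r-1)}_m(u+\Omega)$; $A^{(2)}_{2r}$: $T^{(a-1)}_m(u)T^{(a+1)}_m(u)$ ($a\le r-1$), $M^{(r)}_m=T^{(r-1)}_m(u)T^{(r)}_m(u+\Omega)$; $D^{(2)}_{r+1}$: $T^{(a-1)}_m(u)T^{(a+1)}_m(u)$ ($a\le r-2$), $M^{(r-1)}_m=T^{(r-2)}_m(u)T^{(r)}_m(u)T^{(r)}_m(u+\Omega)$, $M^{(r)}_m=T^{(r-1)}_m(u)$; $E^{(2)}_6$: $M^{(1)}_m=T^{(2)}_m(u)$, $M^{(2)}_m=T^{(1)}_m(u)T^{(3)}_m(u)$, $M^{(3)}_m=T^{(2)}_m(u)T^{(2)}_m(u+\Omega)T^{(4)}_m(u)$, $M^{(4)}_m=T^{(3)}_m(u)$; $D^{(3)}_4$: $M^{(1)}_m=T^{(2)}_m(u)$, $M^{(2)}_m=T^{(1)}_m(u)T^{(1)}_m(u-\Omega)T^{(1)}_m(u+\Omega)$; with $T^{(0)}_m=1$. $\mathcal{T}(X^{(\kappa)}_N)$: commutative ring with generators $T^{(a)}_m(u)^{\pm1}$ ($a\in I_\sigma$, $m\in\mathbb{N}$,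 $u\in\mathbb{C}_{\kappa_a\hbar}$) and relations $T^{(a)}_m(u-1)T^{(a)}_m(u+1)=T^{(a)}_{m-1}(u)T^{(a)}_{m+1}(u)+M^{(a)}_m(u)$, $T^{(a)}_0=1$. $\mathcal{Y}(X^{(\kappa)}_N)$: commutative ring with generators $Y^{(a)}_m(u)^{\pm1}$, $(1+Y^{(a)}_m(u))^{-1}$ (same index set) and relations $Y^{(a)}_m(u-1)Y^{(a)}_m(u+1)=\dfrac{N^{(a)}_m(u)}{(1+Y^{(a)}_{m-1}(u)^{-1})(1+Y^{(a)}_{m+1}(u)^{-1})}$, with $Y^{(a)}_0(u)^{-1}=0$, where $N^{(a)}_m(u)$ is obtained from $M^{(a)}_m(u)$ by replacing every factor $T^{(b)}_m(v)$ with $1+Y^{(b)}_m(v)$ (and $Y^{(0)}_m=0$); e.g. for $A^{(2)}_{2r-1}$, $N^{(r)}_m=(1+Y^{(r-1)}_m(u))(1+Y^{(r-1)}_m(u+\Omega))$. *)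

theory Defs
  imports "HOL-Library.Poly_Mapping" "HOL-Algebra.QuotRing" "HOL-Algebra.Ideal" Complex_Main
begin

datatype twisted_type =
    A2odd nat    (* A^(2)_{2r-1}, r >= 2 *)
  | A2even nat   (* A^(2)_{2r},   r >= 1 *)
  | D2 nat       (* D^(2)_{r+1},  r >= 3 *)
  | E6_2
  | D4_3

fun valid_twisted :: "twisted_type \<Rightarrow> bool" where
  "valid_twisted (A2odd r) = (r \<ge> 2)"
| "valid_twisted (A2even r) = (r \<ge> 1)"
| "valid_twisted (D2 r) = (r \<ge> 3)"
| "valid_twisted E6_2 = True"
| "valid_twisted D4_3 = True"

fun kappa :: "twisted_type \<Rightarrow> nat" where
  "kappa D4_3 = 3"
| "kappa _ = 2"

fun I_sigma :: "twisted_type \<Rightarrow> nat set" where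
  "I_sigma (A2odd r) = {1..r}"
| "I_sigma (A2even r) = {1..r}"
| "I_sigma (D2 r) = {1..r}"
| "I_sigma E6_2 = {1,2,3,4}"
| "I_sigma D4_3 = {1,2}"

fun kappa_a :: "twisted_type \<Rightarrow> nat \<Rightarrow> nat" where
  "kappa_a (A2odd r) a = (if a < r then 1 else 2)"
| "kappa_a (A2even r) a = 1"
| "kappa_a (D2 r) a = (if a < r then 2 else 1)"
| "kappa_a E6_2 a = (if a \<le> 2 then 1 else 2)"
| "kappa_a D4_3 a = (if a = 1 then 1 else 3)"

definition Omega :: "twisted_type \<Rightarrow> complex \<Rightarrow> complex" where
  "Omega X h = 2 * pi * \<i> / (of_nat (kappa X) * h)"

text \<open>Period of the spectral parameter of nodes a: u lives in C / (2 pi i/(kappa_a h)) Z.\<close>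
definition period :: "twisted_type \<Rightarrow> complex \<Rightarrow> nat \<Rightarrow> complex" where
  "period X h a = 2 * pi * \<i> / (of_nat (kappa_a X a) * h)"

text \<open>M^{(a)}_m(u), expressed in terms of a family T b m v (which must return 1 for b = 0).\<close>
fun Mexpr :: "twisted_type \<Rightarrow> complex \<Rightarrow> (nat \<Rightarrow> nat \<Rightarrow> complex \<Rightarrow> 'r::comm_ring_1)
               \<Rightarrow> nat \<Rightarrow> nat \<Rightarrow> complex \<Rightarrow> 'r" where
  "Mexpr (A2odd r) h T a m u =
     (if a \<le> r - 1 then T (a - 1) m u * T (a + 1) m u
      else T (r - 1) m u * T (r - 1) m (u + Omega (A2odd r) h))"
| "Mexpr (A2even r) h T a m u =
     (if a \<le> r - 1 then T (a - 1) m u * T (a + 1) m u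
      else T (r - 1) m u * T r m (u + Omega (A2even r) h))"
| "Mexpr (D2 r) h T a m u =
     (if a \<le> r - 2 then T (a - 1) m u * T (a + 1) m u
      else if a = r - 1 then T (r - 2) m u * T r m u * T r m (u + Omega (D2 r) h)
      else T (r - 1) m u)"
| "Mexpr E6_2 h T a m u =
     (if a = 1 then T 2 m u
      else if a = 2 then T 1 m u * T 3 m u
      else if a = 3 then T 2 m u * T 2 m (u + Omega E6_2 h) * T 4 m u
      else T 3 m u)"
| "Mexpr D4_3 h T a m u =
     (if a = 1 then T 2 m u
      else T 1 m u * T 1 m (u - Omega D4_3 h) * T 1 m (u + Omega D4_3 h))"

type_synonym 'v zpoly = "('v \<Rightarrow>\<^sub>0 nat) \<Rightarrow>\<^sub>0 int"

definition var :: "'v \<Rightarrow> 'v zpoly" where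
  "var v = Poly_Mapping.single (Poly_Mapping.single v 1) 1"

definition poly_ring :: "'v zpoly ring" where
  "poly_ring = \<lparr>carrier = UNIV, monoid.mult = (*), one = 1, zero = 0, add = (+)\<rparr>"

text \<open>The commutative ring presented by generators 'v and relations rels (each relation r means r = 0).\<close>
definition presented_ring :: "'v zpoly set \<Rightarrow> 'v zpoly set ring" where
  "presented_ring rels = poly_ring Quot (genideal poly_ring rels)"

definition cls :: "'v zpoly set \<Rightarrow> 'v zpoly \<Rightarrow> 'v zpoly set" where
  "cls rels p = a_r_coset poly_ring (genideal poly_ring rels) p"

text \<open>TG a m u stands for T^{(a)}_m(u), TI a m u for its inverse.\<close>
datatype tgen = TG nat nat complex | TI nat nat complex

definition Tval :: "nat \<Rightarrow> nat \<Rightarrow> complex \<Rightarrow> tgen zpoly" where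
  "Tval a m u = (if a = 0 \<or> m = 0 then 1 else var (TG a m u))"

definition Tinvval :: "nat \<Rightarrow> nat \<Rightarrow> complex \<Rightarrow> tgen zpoly" where
  "Tinvval a m u = (if a = 0 \<or> m = 0 then 1 else var (TI a m u))"

definition valid_idx :: "twisted_type \<Rightarrow> nat \<Rightarrow> nat \<Rightarrow> bool" where
  "valid_idx X a m \<longleftrightarrow> a \<in> I_sigma X \<and> 1 \<le> m"

text \<open>Generators with indices outside I_sigma x N_{>0} are killed; u is taken modulo the period.\<close>
definition Trels :: "twisted_type \<Rightarrow> complex \<Rightarrow> tgen zpoly set" where
  "Trels X h =
     {var (TG a m u) * var (TI a m u) - 1 | a m u. valid_idx X a m}
   \<union> {var (TG a m u) | a m u. \<not> valid_idx X a m}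
   \<union> {var (TI a m u) | a m u. \<not> valid_idx X a m}
   \<union> {var (TG a m u) - var (TG a m (u + period X h a)) | a m u. True}
   \<union> {var (TI a m u) - var (TI a m (u + period X h a)) | a m u. True}
   \<union> {Tval a m (u - 1) * Tval a m (u + 1)
        - (Tval a (m - 1) u * Tval a (m + 1) u + Mexpr X h Tval a m u) | a m u. valid_idx X a m}"

definition Tring :: "twisted_type \<Rightarrow> complex \<Rightarrow> tgen zpoly set ring" where
  "Tring X h = presented_ring (Trels X h)"

text \<open>YG a m u stands for Y^{(a)}_m(u), YI a m u for its inverse, YW a m u for (1 + Y^{(a)}_m(u))^{-1}.\<close>
datatype ygen = YG nat nat complex | YI nat nat complex | YW nat nat complex

definition Yval :: "nat \<Rightarrow> nat \<Rightarrow> complex \<Rightarrow> ygen zpoly" where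
  "Yval a m u = (if a = 0 \<or> m = 0 then 0 else var (YG a m u))"

text \<open>(1 + Y^{(a)}_k(u)^{-1})^{-1} = Y/(1+Y); equal to 1 for k = 0 since Y_0^{-1} = 0.\<close>
definition Yfac :: "nat \<Rightarrow> nat \<Rightarrow> complex \<Rightarrow> ygen zpoly" where
  "Yfac a k u = (if k = 0 then 1 else var (YG a k u) * var (YW a k u))"

definition Yrels :: "twisted_type \<Rightarrow> complex \<Rightarrow> ygen zpoly set" where
  "Yrels X h =
     {var (YG a m u) * var (YI a m u) - 1 | a m u. valid_idx X a m}
   \<union> {(1 + var (YG a m u)) * var (YW a m u) - 1 | a m u. valid_idx X a m}
   \<union> {var (YG a m u) | a m u. \<not> valid_idx X a m}
   \<union> {var (YI a m u) | a m u. \<not> valid_idx X a m}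
   \<union> {var (YW a m u) | a m u. \<not> valid_idx X a m}
   \<union> {var (YG a m u) - var (YG a m (u + period X h a)) | a m u. True}
   \<union> {var (YI a m u) - var (YI a m (u + period X h a)) | a m u. True}
   \<union> {var (YW a m u) - var (YW a m (u + period X h a)) | a m u. True}
   \<union> {var (YG a m (u - 1)) * var (YG a m (u + 1))
        - Mexpr X h (\<lambda>b k v. 1 + Yval b k v) a m u * Yfac a (m - 1) u * Yfac a (m + 1) u
        | a m u. valid_idx X a m}"

definition Yring :: "twisted_type \<Rightarrow> complex \<Rightarrow> ygen zpoly set ring" where
  "Yring X h = presented_ring (Yrels X h)"

definition phi_img :: "twisted_type \<Rightarrow> complex \<Rightarrow> nat \<Rightarrow> nat \<Rightarrow> complex \<Rightarrow> tgen zpoly" where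
  "phi_img X h a m u = Mexpr X h Tval a m u * Tinvval a (m - 1) u * Tinvval a (m + 1) u"

end

theory Submission
  imports Defs
begin



lemma pr_simps[simp]: "carrier poly_ring = UNIV" "monoid.mult poly_ring = (*)"
  "add poly_ring = (+)" "one poly_ring = 1" "zero poly_ring = 0"
  by (simp_all add: poly_ring_def)

lemma pr_cring: "cring (poly_ring :: 'v zpoly ring)"
proof (rule cringI)
  show "abelian_group (poly_ring :: 'v zpoly ring)"
    by (rule abelian_groupI) (auto simp: poly_ring_def intro: left_minus)
  show "Group.comm_monoid (poly_ring :: 'v zpoly ring)"
    by (rule comm_monoidI) (auto simp: poly_ring_def mult.commute)
qed (auto simp: poly_ring_def distrib_right)

interpretation pr: cring "poly_ring :: 'v zpoly ring" by (rule pr_cring)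

lemma pr_ainv[simp]: "a_inv poly_ring x = - (x :: 'v zpoly)"
  by (rule pr.minus_equality) auto

lemma pr_aminus[simp]: "a_minus poly_ring x y = x - (y :: 'v zpoly)"
  by (simp add: a_minus_def)

abbreviation GI :: "'v zpoly set \<Rightarrow> 'v zpoly set" where
  "GI rels \<equiv> genideal poly_ring rels"

lemma Id_ideal: "ideal (GI rels) poly_ring"
  by (rule pr.genideal_ideal) simp

lemma Id_self: "r \<in> rels \<Longrightarrow> r \<in> GI rels"
  using pr.genideal_self[of rels] by auto

lemma Id_add: "x \<in> GI R \<Longrightarrow> y \<in> GI R \<Longrightarrow> x + y \<in> GI R"
  using additive_subgroup.a_closed[OF ideal.axioms(1)[OF Id_ideal]] by fastforce

lemma Id_uminus: "x \<in> GI R \<Longrightarrow> - x \<in> GI R"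
  using additive_subgroup.a_inv_closed[OF ideal.axioms(1)[OF Id_ideal]] by fastforce

lemma Id_diff: "x \<in> GI R \<Longrightarrow> y \<in> GI R \<Longrightarrow> x - y \<in> GI R"
  using Id_add[OF _ Id_uminus] by (metis diff_conv_add_uminus)

lemma Id_zero: "0 \<in> GI R"
  using additive_subgroup.zero_closed[OF ideal.axioms(1)[OF Id_ideal]] by fastforce

lemma Id_multR: "x \<in> GI R \<Longrightarrow> x * y \<in> GI R"
  using ideal.I_r_closed[OF Id_ideal] by fastforce

lemma Id_multL: "x \<in> GI R \<Longrightarrow> y * x \<in> GI R"
  using ideal.I_l_closed[OF Id_ideal] by fastforce

lemma cls_eq_iff: "cls R p = cls R q \<longleftrightarrow> p - q \<in> GI R"
proof -
  interpret I: ideal "GI R" poly_ring by (rule Id_ideal)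
  have "cls R p = cls R q \<longleftrightarrow> p \<in> cls R q"
    unfolding cls_def
    by (metis I.a_rcos_self I.a_repr_independence' UNIV_I pr_simps(1))
  also have "\<dots> \<longleftrightarrow> p - q \<in> GI R"
    unfolding cls_def using I.a_rcos_module_minus[OF pr.ring_axioms, of q p] by simp
  finally show ?thesis .
qed



definition monoeval :: "('v \<Rightarrow> 'w zpoly) \<Rightarrow> ('v \<Rightarrow>\<^sub>0 nat) \<Rightarrow> 'w zpoly" where
  "monoeval g m = (\<Prod>v\<in>Poly_Mapping.keys m. g v ^ Poly_Mapping.lookup m v)"

definition ev :: "('v \<Rightarrow> 'w zpoly) \<Rightarrow> 'v zpoly \<Rightarrow> 'w zpoly" where
  "ev g p = frag_extend (monoeval g) p"

lemma monoeval_superset: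
  assumes "finite S" "Poly_Mapping.keys m \<subseteq> S"
  shows "monoeval g m = (\<Prod>v\<in>S. g v ^ Poly_Mapping.lookup m v)"
  unfolding monoeval_def
  by (rule prod.mono_neutral_left) (use assms in \<open>auto simp: in_keys_iff\<close>)

lemma monoeval_add: "monoeval g (m + n) = monoeval g m * monoeval g n"
proof -
  let ?S = "Poly_Mapping.keys m \<union> Poly_Mapping.keys n"
  have f: "finite ?S" by simp
  have "Poly_Mapping.keys (m + n) \<subseteq> ?S" by (rule keys_add)
  then have "monoeval g (m + n) = (\<Prod>v\<in>?S. g v ^ Poly_Mapping.lookup (m+n) v)"
    using monoeval_superset f by blast
  also have "\<dots> = (\<Prod>v\<in>?S. g v ^ Poly_Mapping.lookup m v) * (\<Prod>v\<in>?S. g v ^ Poly_Mapping.lookup n v)"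
    by (simp add: lookup_add power_add prod.distrib)
  also have "\<dots> = monoeval g m * monoeval g n"
    using monoeval_superset[OF f, of m g] monoeval_superset[OF f, of n g] by auto
  finally show ?thesis .
qed

lemma monoeval_zero[simp]: "monoeval g 0 = 1"
  by (simp add: monoeval_def)

lemma ev_zero[simp]: "ev g 0 = 0" by (simp add: ev_def)
lemma ev_add: "ev g (p + q) = ev g p + ev g q" by (simp add: ev_def frag_extend_add)
lemma ev_diff: "ev g (p - q) = ev g p - ev g q" by (simp add: ev_def frag_extend_diff)
lemma ev_uminus: "ev g (- p) = - ev g p" by (simp add: ev_def frag_extend_minus)
lemma ev_frag: "ev g (frag_of m) = monoeval g m" by (simp add: ev_def)

lemma ev_one[simp]: "ev g 1 = 1"
  by (metis single_one ev_frag monoeval_zero)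

lemma frag_mult: "frag_of m * frag_of n = frag_of (m + n)"
  by (simp add: mult_single)

lemma ev_mult: fixes p q :: "'v zpoly" shows "ev g (p * q) = ev g p * ev g q"
proof -
  have "\<forall>q. ev g (p * q) = ev g p * ev g q"
    using subset_UNIV[of "Poly_Mapping.keys p"]
  proof (induction p rule: frag_induction)
    case zero then show ?case by simp
  next
    case (one m)
    show ?case
    proof
      fix q :: "'v zpoly"
      show "ev g (frag_of m * q) = ev g (frag_of m) * ev g q"
        using subset_UNIV[of "Poly_Mapping.keys q"]
      proof (induction q rule: frag_induction)
        case zero then show ?case by simp
      next
        case (one n) then show ?case by (simp add: frag_mult ev_frag monoeval_add)
      next
        case (diff a b) then show ?case by (simp add: right_diff_distrib ev_diff)
      qed
    qed
  next
    case (diff a b) then show ?case by (simp add: left_diff_distrib ev_diff)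
  qed
  then show ?thesis by blast
qed

lemma ev_var[simp]: "ev g (var v) = g v"
  by (simp add: var_def ev_frag monoeval_def)

lemma ev_power: "ev g (p ^ k) = ev g p ^ k"
  by (induction k) (simp_all add: ev_mult)

lemma ev_prod: "finite S \<Longrightarrow> ev g (\<Prod>i\<in>S. f i) = (\<Prod>i\<in>S. ev g (f i))"
  by (induction S rule: finite_induct) (simp_all add: ev_mult)

lemma var_power: "var v ^ k = frag_of (Poly_Mapping.single v k)"
proof (induction k)
  case 0 then show ?case by (simp add: )
next
  case (Suc k) then show ?case by (simp add: var_def frag_mult single_add[symmetric])
qed

lemma frag_monoeval: "frag_of m = monoeval var m"
proof -
  have "finite S \<Longrightarrow> (\<Prod>v\<in>S. var v ^ Poly_Mapping.lookup m v) = frag_of (\<Sum>v\<in>S. Poly_Mapping.single v (Poly_Mapping.lookup m v))" for S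
    by (induction S rule: finite_induct)
       (simp_all add: var_power frag_mult )
  moreover have "(\<Sum>v\<in>Poly_Mapping.keys m. Poly_Mapping.single v (Poly_Mapping.lookup m v)) = m"
    by (rule poly_mapping_eqI) (auto simp: lookup_sum lookup_single when_def in_keys_iff
        intro: sum.neutral)
  ultimately show ?thesis by (simp add: monoeval_def)
qed

lemma ev_var_id: "ev var p = p"
  using subset_UNIV[of "Poly_Mapping.keys p"]
  by (induction p rule: frag_induction) (simp_all add: ev_frag ev_diff frag_monoeval[symmetric])

lemma ev_comp: "ev f (ev g p) = ev (\<lambda>v. ev f (g v)) p"
  using subset_UNIV[of "Poly_Mapping.keys p"]
  by (induction p rule: frag_induction)
     (simp_all add: ev_frag ev_diff monoeval_def ev_prod ev_power)

lemma prod_cong_GI: "finite S \<Longrightarrow> (\<And>i. i \<in> S \<Longrightarrow> f i - g i \<in> GI R) \<Longrightarrow>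
   (\<Prod>i\<in>S. f i) - (\<Prod>i\<in>S. g i) \<in> GI R"
proof (induction S rule: finite_induct)
  case empty then show ?case by (simp add: Id_zero)
next
  case (insert x F)
  have "f x * prod f F - g x * prod g F = (f x - g x) * prod f F + g x * (prod f F - prod g F)"
    by (simp add: algebra_simps)
  moreover have "(f x - g x) * prod f F \<in> GI R" using insert by (intro Id_multR) auto
  moreover have "g x * (prod f F - prod g F) \<in> GI R" using insert by (intro Id_multL) auto
  ultimately show ?case using insert by (simp add: Id_add)
qed

lemma power_cong_GI: "a - b \<in> GI R \<Longrightarrow> a ^ k - b ^ k \<in> GI R"
  using prod_cong_GI[of "{..<k}" "\<lambda>_. a" "\<lambda>_. b" R] by simp

lemma ev_cong_GI: "(\<And>v. f v - g v \<in> GI R) \<Longrightarrow> ev f p - ev g p \<in> GI R"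
  using subset_UNIV[of "Poly_Mapping.keys p"]
proof (induction p rule: frag_induction)
  case zero then show ?case by (simp add: Id_zero)
next
  case (one m) then show ?case
    by (simp add: ev_frag monoeval_def prod_cong_GI power_cong_GI)
next
  case (diff a b)
  have "ev f (a - b) - ev g (a - b) = (ev f a - ev g a) - (ev f b - ev g b)" by (simp add: ev_diff)
  then show ?case using diff by (simp add: Id_diff)
qed



lemma ev_ring_hom: "ev g \<in> ring_hom poly_ring poly_ring"
  by (rule ring_hom_memI) (simp_all add: ev_mult ev_add)

lemma ev_GI:
  assumes "\<forall>r\<in>R1. ev g r \<in> GI R2" "p \<in> GI R1"
  shows "ev g p \<in> GI R2"
proof -
  interpret h: ring_hom_ring poly_ring poly_ring "ev g"
    by (rule ring_hom_ringI2[OF pr.ring_axioms pr.ring_axioms ev_ring_hom])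
  have "ideal {r \<in> carrier poly_ring. ev g r \<in> GI R2} poly_ring"
    by (rule h.ideal_vimage[OF Id_ideal])
  then have "GI R1 \<subseteq> {r \<in> carrier poly_ring. ev g r \<in> GI R2}"
    using assms(1) by (intro pr.genideal_minimal) auto
  then show ?thesis using assms(2) by auto
qed

lemma mem_cls: "q \<in> cls R p \<longleftrightarrow> q - p \<in> GI R"
proof -
  interpret I: ideal "GI R" poly_ring by (rule Id_ideal)
  show ?thesis unfolding cls_def using I.a_rcos_module_minus[OF pr.ring_axioms, of p q] by simp
qed

definition ind :: "'v zpoly set \<Rightarrow> 'w zpoly set \<Rightarrow> ('v \<Rightarrow> 'w zpoly) \<Rightarrow> 'v zpoly set \<Rightarrow> 'w zpoly set" where
  "ind R1 R2 g C = (\<Union>p\<in>C. cls R2 (ev g p))"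

lemma ind_cls:
  assumes "\<forall>r\<in>R1. ev g r \<in> GI R2"
  shows "ind R1 R2 g (cls R1 p) = cls R2 (ev g p)"
proof -
  have "cls R2 (ev g q) = cls R2 (ev g p)" if "q \<in> cls R1 p" for q
  proof -
    have "q - p \<in> GI R1" using that mem_cls by blast
    then have "ev g (q - p) \<in> GI R2" using ev_GI[OF assms] by blast
    then show ?thesis by (simp add: cls_eq_iff ev_diff)
  qed
  moreover have "p \<in> cls R1 p" by (simp add: mem_cls Id_zero)
  ultimately show ?thesis unfolding ind_def by blast
qed

lemma carrier_pres: "carrier (presented_ring R) = range (cls R)"
  by (auto simp: presented_ring_def FactRing_def A_RCOSETS_def' cls_def)

lemma pres_mult: "monoid.mult (presented_ring R) (cls R p) (cls R q) = cls R (p * q)"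
proof -
  interpret I: ideal "GI R" poly_ring by (rule Id_ideal)
  show ?thesis using I.rcoset_mult_add[of p q]
    by (simp add: presented_ring_def FactRing_def cls_def)
qed

lemma pres_add: "add (presented_ring R) (cls R p) (cls R q) = cls R (p + q)"
proof -
  interpret I: ideal "GI R" poly_ring by (rule Id_ideal)
  show ?thesis using I.a_rcos_sum[of p q]
    by (simp add: presented_ring_def FactRing_def cls_def)
qed

lemma pres_one: "one (presented_ring R) = cls R 1"
  by (simp add: presented_ring_def FactRing_def cls_def)

lemma pres_cring: "cring (presented_ring R)"
proof -
  interpret I: ideal "GI R" poly_ring by (rule Id_ideal)
  show ?thesis unfolding presented_ring_def by (rule I.quotient_is_cring[OF pr_cring])
qed

lemma ind_hom:
  assumes "\<forall>r\<in>R1. ev g r \<in> GI R2"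
  shows "ind R1 R2 g \<in> ring_hom (presented_ring R1) (presented_ring R2)"
proof (rule ring_hom_memI)
  fix x assume "x \<in> carrier (presented_ring R1)"
  then obtain p where "x = cls R1 p" by (auto simp: carrier_pres)
  then show "ind R1 R2 g x \<in> carrier (presented_ring R2)"
    by (simp add: ind_cls[OF assms] carrier_pres)
next
  fix x y assume "x \<in> carrier (presented_ring R1)" "y \<in> carrier (presented_ring R1)"
  then obtain p q where "x = cls R1 p" "y = cls R1 q" by (auto simp: carrier_pres)
  then show "ind R1 R2 g (monoid.mult (presented_ring R1) x y)
     = monoid.mult (presented_ring R2) (ind R1 R2 g x) (ind R1 R2 g y)"
    and "ind R1 R2 g (add (presented_ring R1) x y)
     = add (presented_ring R2) (ind R1 R2 g x) (ind R1 R2 g y)"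
    by (simp_all add: ind_cls[OF assms] pres_mult pres_add ev_mult ev_add)
next
  show "ind R1 R2 g (one (presented_ring R1)) = one (presented_ring R2)"
    by (simp add: pres_one ind_cls[OF assms])
qed

lemma ind_inverse:
  assumes "\<forall>r\<in>R1. ev g r \<in> GI R2" "\<forall>r\<in>R2. ev f r \<in> GI R1"
    and "\<And>v. ev f (g v) - var v \<in> GI R1"
    and "x \<in> carrier (presented_ring R1)"
  shows "ind R2 R1 f (ind R1 R2 g x) = x"
proof -
  obtain p where x: "x = cls R1 p" using assms(4) by (auto simp: carrier_pres)
  have "ev (\<lambda>v. ev f (g v)) p - ev var p \<in> GI R1" by (rule ev_cong_GI) (rule assms(3))
  then show ?thesis
    by (simp add: x ind_cls[OF assms(1)] ind_cls[OF assms(2)] ev_comp ev_var_id cls_eq_iff)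
qed



lemma Mexpr_mult: "Mexpr X h (\<lambda>b k v. f b k v * g b k v) a m u = Mexpr X h f a m u * Mexpr X h g a m u"
  by (cases X) (auto simp: algebra_simps)

lemma Mexpr_hom: assumes "\<And>x y. F (x * y) = F x * F y"
  shows "F (Mexpr X h f a m u) = Mexpr X h (\<lambda>b k v. F (f b k v)) a m u"
  by (cases X) (auto simp: assms)

lemma Mexpr_one: "Mexpr X h (\<lambda>b k v. 1) a m u = 1"
  by (cases X) auto

lemma Mexpr_shift: "Mexpr X h f a m (u + c) = Mexpr X h (\<lambda>b k v. f b k (v + c)) a m u"
  by (cases X) (auto simp: algebra_simps)

lemma Mexpr_level: "Mexpr X h f a m u = Mexpr X h (\<lambda>b k v. f b m v) a m' u"
  by (cases X) auto

lemma Mexpr_local: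
  assumes "\<And>b k. f b k u = g b k u" "\<And>b k. f b k (u + Omega X h) = g b k (u + Omega X h)"
    "\<And>b k. f b k (u - Omega X h) = g b k (u - Omega X h)"
  shows "Mexpr X h f a m u = Mexpr X h g a m u"
  using assms by (cases X) auto

lemma Mexpr_restrict:
  assumes "valid_twisted X" "a \<in> I_sigma X"
  shows "Mexpr X h f a m u = Mexpr X h (\<lambda>b k v. if b = 0 \<or> b \<in> I_sigma X then f b k v else 0) a m u"
  using assms by (cases X) auto

lemma Mexpr_cong:
  fixes R :: "'v zpoly set"
  assumes "\<And>b k v. f b k v - g b k v \<in> GI R"
  shows "Mexpr X h f a m u - Mexpr X h g a m u \<in> GI R"
proof -
  have c2: "x1 - y1 \<in> GI R \<Longrightarrow> x2 - y2 \<in> GI R \<Longrightarrow> x1 * x2 - y1 * y2 \<in> GI R" for x1 x2 y1 y2 :: "'v zpoly"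
    using prod_cong_GI[of "{0::nat,1}" "\<lambda>i. if i = 0 then x1 else x2" "\<lambda>i. if i = 0 then y1 else y2" R]
    by auto
  have c3: "x1 - y1 \<in> GI R \<Longrightarrow> x2 - y2 \<in> GI R \<Longrightarrow> x3 - y3 \<in> GI R \<Longrightarrow>
     x1 * x2 * x3 - y1 * y2 * y3 \<in> GI R" for x1 x2 x3 y1 y2 y3 :: "'v zpoly"
    by (intro c2) auto
  show ?thesis by (cases X) (auto intro!: c2 c3 assms)
qed


lemma period_vals:
  assumes "h \<noteq> 0"
  shows "period (A2odd r) h b = (if b < r then 2 * Omega (A2odd r) h else Omega (A2odd r) h)"
    "period (A2even r) h b = 2 * Omega (A2even r) h"
    "period (D2 r) h b = (if b < r then Omega (D2 r) h else 2 * Omega (D2 r) h)"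
    "period E6_2 h b = (if b \<le> 2 then 2 * Omega E6_2 h else Omega E6_2 h)"
    "period D4_3 h b = (if b = 1 then 3 * Omega D4_3 h else Omega D4_3 h)"
  using assms by (auto simp: period_def Omega_def field_simps)

lemma Mexpr_per:
  assumes "valid_twisted X" "a \<in> I_sigma X" "h \<noteq> 0"
    and per: "\<And>b k v. f b k (v + period X h b) = f b k v"
  shows "Mexpr X h f a m (u + period X h a) = Mexpr X h f a m u"
proof (cases X)
  case (A2odd r)
  let ?O = "Omega X h"
  have p1: "f b k (v + 2 * ?O) = f b k v" if "b < r" for b k v
    using per[of b k v] that by (simp add: period_vals[OF assms(3)] A2odd)
  have p2: "f b k (v + ?O) = f b k v" if "\<not> b < r" for b k v
    using per[of b k v] that by (simp add: period_vals[OF assms(3)] A2odd)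
  have p3: "f b k (v + ?O + ?O) = f b k v" for b k v
    using p1[of b k v] p2[of b k "v + ?O"] p2[of b k v] by (cases "b < r") (auto simp: algebra_simps)
  show ?thesis
  proof (cases "a < r")
    case True
    then show ?thesis using assms(1,2) p3 A2odd
      by (auto simp: period_vals[OF assms(3)] algebra_simps simp del: mult_2 mult_2_right)
  next
    case False
    then have "a = r" using assms(2) A2odd by auto
    then show ?thesis using assms(1,2) p3 A2odd
      by (auto simp: period_vals[OF assms(3)] algebra_simps)
  qed
next
  case (A2even r)
  let ?O = "Omega X h"
  have p1: "f b k (v + 3 * ?O) = f b k (v + ?O)" for b k v
    using per[of b k "v + ?O"] by (simp add: period_vals[OF assms(3)] A2even algebra_simps)
  show ?thesis using assms(1,2) per p1 A2even
      by (auto simp: period_vals[OF assms(3)] algebra_simps)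
next
  case (D2 r)
  let ?O = "Omega X h"
  have p1: "f b k (v + ?O) = f b k v" if "b < r" for b k v
    using per[of b k v] that by (simp add: period_vals[OF assms(3)] D2)
  have p2: "f b k (v + 2 * ?O) = f b k v" if "\<not> b < r" for b k v
    using per[of b k v] that by (simp add: period_vals[OF assms(3)] D2)
  have p3: "f b k (v + ?O + ?O) = f b k v" for b k v
    using p1[of b k v] p2[of b k v] p1[of b k "v + ?O"] by (cases "b < r") (auto simp: algebra_simps)
  show ?thesis
  proof (cases "a < r")
    case True
    then show ?thesis using assms(1,2) p1 p3 D2
      by (auto simp: period_vals[OF assms(3)] algebra_simps)
  next
    case False
    then have "a = r" using assms(2) D2 by auto
    have p4: "f b k (v + 2 * ?O) = f b k v" for b k v
      using p3[of b k v] by (simp add: algebra_simps mult_2)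
    from \<open>a = r\<close> show ?thesis using assms(1,2) p4 D2
      by (auto simp: period_vals[OF assms(3)] algebra_simps)
  qed
next
  case E6_2
  let ?O = "Omega X h"
  have p1: "f b k (v + 2 * ?O) = f b k v" if "b \<le> 2" for b k v
    using per[of b k v] that by (simp add: period_vals[OF assms(3)] E6_2)
  have p2: "f b k (v + ?O) = f b k v" if "\<not> b \<le> 2" for b k v
    using per[of b k v] that by (simp add: period_vals[OF assms(3)] E6_2)
  have p3: "f b k (v + ?O + ?O) = f b k v" for b k v
    using p1[of b k v] p2[of b k "v + ?O"] p2[of b k v] by (cases "b \<le> 2") (auto simp: algebra_simps)
  show ?thesis
    using assms(1,2) p1 p2 p3 E6_2 by (auto simp: period_vals[OF assms(3)] algebra_simps)
next
  case D4_3
  let ?O = "Omega X h"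
  have p1: "f 1 k (v + 3 * ?O) = f 1 k v" for k v
    using per[of 1 k v] by (simp add: period_vals[OF assms(3)] D4_3)
  have p2: "f b k (v + ?O) = f b k v" if "b \<noteq> 1" for b k v
    using per[of b k v] that by (simp add: period_vals[OF assms(3)] D4_3)
  have p3: "f 1 k (u + ?O + ?O) = f 1 k (u - ?O)" for k
    using p1[of k "u - ?O"] by (simp add: algebra_simps)
  have p4: "f 2 k (v + 3 * ?O) = f 2 k v" for k v
    using p2[of 2 k v] p2[of 2 k "v + ?O"] p2[of 2 k "v + ?O + ?O"] by (simp add: algebra_simps)
  show ?thesis
    using assms(1,2) p1 p2 p3 p4 D4_3 by (auto simp: period_vals[OF assms(3)] algebra_simps)
qed


definition cg :: "'v zpoly set \<Rightarrow> 'v zpoly \<Rightarrow> 'v zpoly \<Rightarrow> bool" where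
  "cg R x y \<longleftrightarrow> x - y \<in> GI R"

lemma cg_refl[simp]: "cg R x x" by (simp add: cg_def Id_zero)
lemma cg_eq: "x = y \<Longrightarrow> cg R x y" by simp
lemma cg_sym: "cg R x y \<Longrightarrow> cg R y x"
  unfolding cg_def using Id_uminus by fastforce
lemma cg_trans[trans]: "cg R x y \<Longrightarrow> cg R y z \<Longrightarrow> cg R x z"
  unfolding cg_def using Id_add by fastforce
lemma cg_add: "cg R x y \<Longrightarrow> cg R x' y' \<Longrightarrow> cg R (x + x') (y + y')"
  unfolding cg_def using Id_add by (fastforce simp: algebra_simps)
lemma cg_diff: "cg R x y \<Longrightarrow> cg R x' y' \<Longrightarrow> cg R (x - x') (y - y')"
  unfolding cg_def using Id_diff by (fastforce simp: algebra_simps)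
lemma cg_mult: "cg R x y \<Longrightarrow> cg R x' y' \<Longrightarrow> cg R (x * x') (y * y')"
proof -
  assume a: "cg R x y" "cg R x' y'"
  have "x * x' - y * y' = (x - y) * x' + y * (x' - y')" by (simp add: algebra_simps)
  then show ?thesis using a unfolding cg_def by (metis Id_add Id_multL Id_multR)
qed
lemma cg_multL: "cg R x y \<Longrightarrow> cg R (z * x) (z * y)" by (rule cg_mult) auto
lemma cg_multR: "cg R x y \<Longrightarrow> cg R (x * z) (y * z)" by (rule cg_mult) auto
lemma cg_rel: "r \<in> R \<Longrightarrow> cg R r 0" by (simp add: cg_def Id_self)
lemma cg_rel_eq: "a - b \<in> R \<Longrightarrow> cg R a b" by (simp add: cg_def Id_self)
lemma cg_cls: "cg R x y \<longleftrightarrow> cls R x = cls R y" by (simp add: cg_def cls_eq_iff)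

lemma cg_Mexpr: "(\<And>b k v. cg R (f b k v) (g b k v)) \<Longrightarrow> cg R (Mexpr X h f a m u) (Mexpr X h g a m u)"
  unfolding cg_def by (rule Mexpr_cong)

lemma cg_ev: "(\<And>v. cg R (f v) (g v)) \<Longrightarrow> cg R (ev f p) (ev g p)"
  unfolding cg_def by (rule ev_cong_GI)

lemma cg_shift_int:
  assumes "\<And>v. cg R (f (v + p)) (f v)"
  shows "cg R (f (v + of_int n * p)) (f v)"
proof -
  have pos: "cg R (f (w + of_nat k * p)) (f w)" for k w
  proof (induction k)
    case (Suc k)
    have "cg R (f (w + of_nat (Suc k) * p)) (f (w + of_nat k * p))"
      using assms[of "w + of_nat k * p"] by (simp add: algebra_simps)
    then show ?case using Suc cg_trans by blast
  qed simp
  show ?thesis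
  proof (cases "n \<ge> 0")
    case True
    then show ?thesis using pos[of v "nat n"] by simp
  next
    case False
    have "cg R (f (v + of_int n * p + of_nat (nat (-n)) * p)) (f (v + of_int n * p))"
      by (rule pos)
    moreover have "v + of_int n * p + of_nat (nat (-n)) * p = v" using False
      by (simp add: algebra_simps of_nat_nat)
    ultimately show ?thesis using cg_sym by fastforce
  qed
qed

definition nrm :: "complex \<Rightarrow> complex \<Rightarrow> complex" where
  "nrm p v = (SOME w. \<exists>n::int. w = v + of_int n * p)"

lemma nrm_in: "\<exists>n::int. nrm p v = v + of_int n * p"
  unfolding nrm_def by (rule someI_ex) (rule exI[of _ v], rule exI[of _ 0], simp)

lemma nrm_per: "nrm p (v + p) = nrm p v"
proof -
  have "(\<exists>n::int. w = v + p + of_int n * p) \<longleftrightarrow> (\<exists>n::int. w = v + of_int n * p)" for w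
  proof
    assume "\<exists>n::int. w = v + p + of_int n * p"
    then obtain n :: int where "w = v + p + of_int n * p" by blast
    then have "w = v + of_int (n + 1) * p" by (simp add: algebra_simps)
    then show "\<exists>n::int. w = v + of_int n * p" by blast
  next
    assume "\<exists>n::int. w = v + of_int n * p"
    then obtain n :: int where "w = v + of_int n * p" by blast
    then have "w = v + p + of_int (n - 1) * p" by (simp add: algebra_simps)
    then show "\<exists>n::int. w = v + p + of_int n * p" by blast
  qed
  then show ?thesis unfolding nrm_def by simp
qed

lemma cg_nrm:
  assumes "\<And>v. cg R (f (v + p)) (f v)"
  shows "cg R (f (nrm p v)) (f v)"
  using nrm_in[of p v] cg_shift_int[of R f p, OF assms] by metis


lemma cg_Mexpr_I:
  assumes "valid_twisted X" "a \<in> I_sigma X"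
    and "\<And>b v. b = 0 \<or> b \<in> I_sigma X \<Longrightarrow> cg R (f b m v) (g b m v)"
  shows "cg R (Mexpr X h f a m u) (Mexpr X h g a m u)"
proof -
  let ?r = "\<lambda>f b k v. if b = 0 \<or> b \<in> I_sigma X then f b m v else 0"
  have "Mexpr X h f a m u = Mexpr X h (?r f) a m u"
    by (subst Mexpr_level[of X h f a m u m]) (rule Mexpr_restrict[OF assms(1,2)])
  moreover have "Mexpr X h g a m u = Mexpr X h (?r g) a m u"
    by (subst Mexpr_level[of X h g a m u m]) (rule Mexpr_restrict[OF assms(1,2)])
  moreover have "cg R (Mexpr X h (?r f) a m u) (Mexpr X h (?r g) a m u)"
    by (rule cg_Mexpr) (simp add: assms(3))
  ultimately show ?thesis by simp
qed

lemma cg_Mexpr_per: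
  assumes "valid_twisted X" "a \<in> I_sigma X" "h \<noteq> 0"
    and "\<And>b k v. cg R (f b k (v + period X h b)) (f b k v)"
  shows "cg R (Mexpr X h f a m (u + period X h a)) (Mexpr X h f a m u)"
proof -
  let ?n = "\<lambda>b k v. f b k (nrm (period X h b) v)"
  have c: "cg R (f b k v) (?n b k v)" for b k v
    by (rule cg_sym, rule cg_nrm[of R "f b k"]) (rule assms(4))
  have "cg R (Mexpr X h f a m (u + period X h a)) (Mexpr X h ?n a m (u + period X h a))"
    by (rule cg_Mexpr) (rule c)
  also have "Mexpr X h ?n a m (u + period X h a) = Mexpr X h ?n a m u"
    by (rule Mexpr_per[OF assms(1-3)]) (simp add: nrm_per)
  also have "cg R \<dots> (Mexpr X h f a m u)"
    by (rule cg_Mexpr) (rule cg_sym, rule c)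
  finally show ?thesis .
qed

lemma Mexpr_zero_level_one: "Mexpr X h (\<lambda>b k v. if b = 0 \<or> k = 0 then 1 else f b k v) a 0 u = 1"
  by (subst Mexpr_level[where m'=0]) (simp add: Mexpr_one)

lemma T_inv: "b = 0 \<or> k = 0 \<or> valid_idx X b k \<Longrightarrow> cg (Trels X h) (Tval b k v * Tinvval b k v) 1"
  by (auto simp: Tval_def Tinvval_def Trels_def intro!: cg_rel_eq)

lemma T_per: "cg (Trels X h) (Tval b k (v + period X h b)) (Tval b k v)"
proof -
  have "var (TG b k v) - var (TG b k (v + period X h b)) \<in> Trels X h"
    unfolding Trels_def by blast
  then show ?thesis by (auto simp: Tval_def intro!: cg_sym[OF cg_rel_eq])
qed

lemma Ti_per: "cg (Trels X h) (Tinvval b k (v + period X h b)) (Tinvval b k v)"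
proof -
  have "var (TI b k v) - var (TI b k (v + period X h b)) \<in> Trels X h"
    unfolding Trels_def by blast
  then show ?thesis by (auto simp: Tinvval_def intro!: cg_sym[OF cg_rel_eq])
qed

lemma T_sys: "valid_idx X a m \<Longrightarrow> cg (Trels X h) (Tval a m (u - 1) * Tval a m (u + 1))
    (Tval a (m - 1) u * Tval a (m + 1) u + Mexpr X h Tval a m u)"
  by (rule cg_rel_eq) (unfold Trels_def, blast)

lemma MT_inv:
  assumes "valid_twisted X" "a \<in> I_sigma X"
  shows "cg (Trels X h) (Mexpr X h Tval a m u * Mexpr X h Tinvval a m u) 1"
proof -
  have "Mexpr X h Tval a m u * Mexpr X h Tinvval a m u = Mexpr X h (\<lambda>b k v. Tval b k v * Tinvval b k v) a m u"
    by (simp add: Mexpr_mult)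
  also have "cg (Trels X h) \<dots> (Mexpr X h (\<lambda>b k v. 1) a m u)"
    by (rule cg_Mexpr_I[OF assms]) (rule T_inv, auto simp: valid_idx_def)
  finally show ?thesis by (simp add: Mexpr_one)
qed


fun gphi :: "twisted_type \<Rightarrow> complex \<Rightarrow> ygen \<Rightarrow> tgen zpoly" where
  "gphi X h (YG a m u) = (if valid_idx X a m then phi_img X h a m u else 0)"
| "gphi X h (YI a m u) = (if valid_idx X a m
      then Mexpr X h Tinvval a m u * Tval a (m - 1) u * Tval a (m + 1) u else 0)"
| "gphi X h (YW a m u) = (if valid_idx X a m
      then Tval a (m - 1) u * Tval a (m + 1) u * Tinvval a m (u - 1) * Tinvval a m (u + 1) else 0)"

lemma ev_diff_GI: "cg R (ev g A) (ev g B) \<Longrightarrow> ev g (A - B) \<in> GI R"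
  by (simp add: ev_diff cg_def)

context
  fixes X :: twisted_type and h :: complex
  assumes vX: "valid_twisted X" and h0: "h \<noteq> 0"
begin

abbreviation "RT \<equiv> Trels X h"

lemma vI: "valid_idx X a m \<Longrightarrow> a \<in> I_sigma X \<and> 1 \<le> m" by (simp add: valid_idx_def)

lemma T_inv_pm:
  assumes "valid_idx X a m"
  shows "cg RT (Tval a (m - 1) u * Tinvval a (m - 1) u) 1"
    "cg RT (Tval a (m + 1) u * Tinvval a (m + 1) u) 1"
    "cg RT (Tval a m u * Tinvval a m u) 1"
  using assms by (auto intro!: T_inv simp: valid_idx_def)

lemma R1: assumes "valid_idx X a m"
  shows "ev (gphi X h) (var (YG a m u) * var (YI a m u) - 1) \<in> GI RT"
proof (rule ev_diff_GI)
  let ?M = "Mexpr X h Tval a m u" and ?Mi = "Mexpr X h Tinvval a m u"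
  have "ev (gphi X h) (var (YG a m u) * var (YI a m u)) =
     (?M * ?Mi) * (Tval a (m - 1) u * Tinvval a (m - 1) u) * (Tval a (m + 1) u * Tinvval a (m + 1) u)"
    using assms by (simp add: ev_mult phi_img_def algebra_simps)
  also have "cg RT \<dots> (1 * 1 * 1)"
    using assms MT_inv[OF vX] T_inv_pm[OF assms] by (intro cg_mult) (auto simp: valid_idx_def)
  finally show "cg RT (ev (gphi X h) (var (YG a m u) * var (YI a m u))) (ev (gphi X h) 1)" by simp
qed

lemma R2: assumes "valid_idx X a m"
  shows "ev (gphi X h) ((1 + var (YG a m u)) * var (YW a m u) - 1) \<in> GI RT"
proof (rule ev_diff_GI)
  let ?M = "Mexpr X h Tval a m u"
  let ?T1 = "Tval a (m - 1) u" and ?T2 = "Tval a (m + 1) u"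
  let ?I1 = "Tinvval a (m - 1) u" and ?I2 = "Tinvval a (m + 1) u"
  let ?A = "Tinvval a m (u - 1) * Tinvval a m (u + 1)"
  have "ev (gphi X h) ((1 + var (YG a m u)) * var (YW a m u)) =
     (?T1 * ?T2 + ?M * (?T1 * ?I1) * (?T2 * ?I2)) * ?A"
    using assms by (simp add: ev_mult ev_add phi_img_def algebra_simps)
  also have "cg RT \<dots> ((?T1 * ?T2 + ?M * 1 * 1) * ?A)"
    using T_inv_pm[OF assms] by (intro cg_mult cg_add) auto
  also have "cg RT \<dots> ((Tval a m (u - 1) * Tval a m (u + 1)) * ?A)"
    by (rule cg_multR, rule cg_sym) (use T_sys[OF assms] in simp)
  also have "\<dots> = (Tval a m (u - 1) * Tinvval a m (u - 1)) * (Tval a m (u + 1) * Tinvval a m (u + 1))"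
    by (simp add: algebra_simps)
  also have "cg RT \<dots> (1 * 1)"
    using T_inv_pm(3)[OF assms] by (intro cg_mult) auto
  finally show "cg RT (ev (gphi X h) ((1 + var (YG a m u)) * var (YW a m u))) (ev (gphi X h) 1)" by simp
qed

lemma M_per: "a \<in> I_sigma X \<Longrightarrow> cg RT (Mexpr X h Tval a m (u + period X h a)) (Mexpr X h Tval a m u)"
  by (rule cg_Mexpr_per[OF vX _ h0]) (auto intro: T_per)

lemma Mi_per: "a \<in> I_sigma X \<Longrightarrow> cg RT (Mexpr X h Tinvval a m (u + period X h a)) (Mexpr X h Tinvval a m u)"
  by (rule cg_Mexpr_per[OF vX _ h0]) (auto intro: Ti_per)

lemma R6: "ev (gphi X h) (var (YG a m u) - var (YG a m (u + period X h a))) \<in> GI RT"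
proof (rule ev_diff_GI, cases "valid_idx X a m")
  case True
  have "cg RT (ev (gphi X h) (var (YG a m (u + period X h a)))) (ev (gphi X h) (var (YG a m u)))"
    using True M_per[of a m u] Ti_per[where X=X and h=h and b=a and k="m - 1" and v=u] Ti_per[where X=X and h=h and b=a and k="m + 1" and v=u]
    by (auto simp: phi_img_def valid_idx_def intro!: cg_mult)
  then show "cg RT (ev (gphi X h) (var (YG a m u))) (ev (gphi X h) (var (YG a m (u + period X h a))))" by (rule cg_sym)
qed simp

lemma R7: "ev (gphi X h) (var (YI a m u) - var (YI a m (u + period X h a))) \<in> GI RT"
proof (rule ev_diff_GI, cases "valid_idx X a m")
  case True
  have "cg RT (ev (gphi X h) (var (YI a m (u + period X h a)))) (ev (gphi X h) (var (YI a m u)))"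
    using True Mi_per[of a m u] T_per[where X=X and h=h and b=a and k="m - 1" and v=u] T_per[where X=X and h=h and b=a and k="m + 1" and v=u]
    by (auto simp: valid_idx_def intro!: cg_mult)
  then show "cg RT (ev (gphi X h) (var (YI a m u))) (ev (gphi X h) (var (YI a m (u + period X h a))))" by (rule cg_sym)
qed simp

lemma R8: "ev (gphi X h) (var (YW a m u) - var (YW a m (u + period X h a))) \<in> GI RT"
proof (rule ev_diff_GI, cases "valid_idx X a m")
  case True
  have e1: "u + period X h a - 1 = (u - 1) + period X h a" "u + period X h a + 1 = (u + 1) + period X h a"
    by (simp_all add: algebra_simps)
  have "cg RT (ev (gphi X h) (var (YW a m (u + period X h a)))) (ev (gphi X h) (var (YW a m u)))"
    using True T_per[where X=X and h=h and b=a and k="m - 1" and v=u] T_per[where X=X and h=h and b=a and k="m + 1" and v=u]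
      Ti_per[where X=X and h=h and b=a and k=m and v="u - 1"] Ti_per[where X=X and h=h and b=a and k=m and v="u + 1"]
    unfolding e1 by (auto simp: valid_idx_def e1 intro!: cg_mult)
  then show "cg RT (ev (gphi X h) (var (YW a m u))) (ev (gphi X h) (var (YW a m (u + period X h a))))" by (rule cg_sym)
qed simp

end


context
  fixes X :: twisted_type and h :: complex
  assumes vX: "valid_twisted X" and h0: "h \<noteq> 0"
begin

abbreviation "RT' \<equiv> Trels X h"

lemma zero_notin_I[simp]: "0 \<notin> I_sigma X" by (cases X) auto

lemma Mexpr_m1: "Mexpr X h f a m (u - 1) = Mexpr X h (\<lambda>b k v. f b k (v - 1)) a m u"
  using Mexpr_shift[of X h f a m u "-1"] by simp

lemma Mi_zero: "Mexpr X h Tinvval a 0 u = 1"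
proof -
  have "Mexpr X h Tinvval a 0 u = Mexpr X h (\<lambda>b k v. Tinvval b 0 v) a 0 u"
    by (rule Mexpr_level)
  also have "(\<lambda>b k v. Tinvval b 0 v) = (\<lambda>b k v. 1)" by (simp add: Tinvval_def)
  finally show ?thesis by (simp add: Mexpr_one)
qed

lemma F_Mi:
  assumes "a \<in> I_sigma X"
  shows "cg RT' (ev (gphi X h) (Yfac a k u) * Mexpr X h Tinvval a k u)
                (Tinvval a k (u - 1) * Tinvval a k (u + 1))"
proof (cases "k = 0")
  case True
  then show ?thesis by (simp add: Yfac_def Mi_zero Tinvval_def)
next
  case False
  then have vk: "valid_idx X a k" using assms by (simp add: valid_idx_def)
  have "ev (gphi X h) (Yfac a k u) * Mexpr X h Tinvval a k u =
    (Mexpr X h Tval a k u * Mexpr X h Tinvval a k u) * (Tval a (k - 1) u * Tinvval a (k - 1) u)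
    * (Tval a (k + 1) u * Tinvval a (k + 1) u) * (Tinvval a k (u - 1) * Tinvval a k (u + 1))"
    using False vk by (simp add: Yfac_def ev_mult phi_img_def algebra_simps)
  also have "cg RT' \<dots> (1 * 1 * 1 * (Tinvval a k (u - 1) * Tinvval a k (u + 1)))"
    using MT_inv[OF vX assms] T_inv_pm[OF vX h0 vk] by (intro cg_mult) auto
  finally show ?thesis by simp
qed

definition Gf :: "nat \<Rightarrow> nat \<Rightarrow> complex \<Rightarrow> tgen zpoly" where
  "Gf b k v = (if b = 0 then 1 else Tval b (k - 1) v * Tval b (k + 1) v + Mexpr X h Tval b k v)"

lemma R9:
  assumes vm: "valid_idx X a m"
  shows "ev (gphi X h) (var (YG a m (u - 1)) * var (YG a m (u + 1))
        - Mexpr X h (\<lambda>b k v. 1 + Yval b k v) a m u * Yfac a (m - 1) u * Yfac a (m + 1) u) \<in> GI RT'"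
proof (rule ev_diff_GI)
  let ?g = "gphi X h"
  have aI: "a \<in> I_sigma X" and m1: "1 \<le> m" using vm by (auto simp: valid_idx_def)
  let ?G = "Mexpr X h Gf a m u"
  let ?J = "\<lambda>k. Tinvval a k (u - 1) * Tinvval a k (u + 1)"
  let ?F = "\<lambda>k. ev ?g (Yfac a k u)"
  let ?Mi = "\<lambda>k. Mexpr X h Tinvval a k u"
  have e0: "ev ?g (var (YG a m (u - 1)) * var (YG a m (u + 1))) =
     (Mexpr X h Tval a m (u - 1) * Mexpr X h Tval a m (u + 1)) * ?J (m - 1) * ?J (m + 1)"
    using vm by (simp add: ev_mult phi_img_def algebra_simps)
  have e1: "Mexpr X h Tval a m (u - 1) * Mexpr X h Tval a m (u + 1)
     = Mexpr X h (\<lambda>b k v. Tval b k (v - 1) * Tval b k (v + 1)) a m u"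
    by (simp add: Mexpr_m1 Mexpr_shift Mexpr_mult)
  have c1: "cg RT' (Mexpr X h (\<lambda>b k v. Tval b k (v - 1) * Tval b k (v + 1)) a m u) ?G"
  proof (rule cg_Mexpr_I[OF vX aI])
    fix b v assume "b = 0 \<or> b \<in> I_sigma X"
    then show "cg RT' (Tval b m (v - 1) * Tval b m (v + 1)) (Gf b m v)"
    proof
      assume "b = 0" then show ?thesis by (simp add: Gf_def Tval_def)
    next
      assume "b \<in> I_sigma X"
      then have "valid_idx X b m" using m1 by (simp add: valid_idx_def)
      moreover have "b \<noteq> 0" using \<open>b \<in> I_sigma X\<close> zero_notin_I by metis
      ultimately show ?thesis using T_sys[of X b m h v] by (simp add: Gf_def)
    qed
  qed
  have L: "cg RT' (ev ?g (var (YG a m (u - 1)) * var (YG a m (u + 1)))) (?G * ?J (m - 1) * ?J (m + 1))"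
    unfolding e0 e1 by (rule cg_multR[OF cg_multR[OF c1]])
  have "ev ?g (Mexpr X h (\<lambda>b k v. 1 + Yval b k v) a m u) = Mexpr X h (\<lambda>b k v. 1 + ev ?g (Yval b k v)) a m u"
    by (subst Mexpr_hom[where F = "ev ?g"]) (simp_all add: ev_mult ev_add)
  also have "cg RT' \<dots> (Mexpr X h (\<lambda>b k v. Gf b k v * Tinvval b (k - 1) v * Tinvval b (k + 1) v) a m u)"
  proof (rule cg_Mexpr_I[OF vX aI])
    fix b v assume "b = 0 \<or> b \<in> I_sigma X"
    then show "cg RT' (1 + ev ?g (Yval b m v)) (Gf b m v * Tinvval b (m - 1) v * Tinvval b (m + 1) v)"
    proof
      assume "b = 0" then show ?thesis by (simp add: Gf_def Tinvval_def Yval_def)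
    next
      assume bI: "b \<in> I_sigma X"
      then have vb: "valid_idx X b m" using m1 by (simp add: valid_idx_def)
      have b0: "b \<noteq> 0" using bI zero_notin_I by metis
      have "Gf b m v * Tinvval b (m - 1) v * Tinvval b (m + 1) v =
        (Tval b (m - 1) v * Tinvval b (m - 1) v) * (Tval b (m + 1) v * Tinvval b (m + 1) v)
        + Mexpr X h Tval b m v * Tinvval b (m - 1) v * Tinvval b (m + 1) v"
        using b0 by (simp add: Gf_def algebra_simps)
      also have "cg RT' \<dots> (1 * 1 + Mexpr X h Tval b m v * Tinvval b (m - 1) v * Tinvval b (m + 1) v)"
        using T_inv_pm[OF vX h0 vb] by (intro cg_add cg_mult) auto
      finally have c: "cg RT' (Gf b m v * Tinvval b (m - 1) v * Tinvval b (m + 1) v)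
         (1 * 1 + Mexpr X h Tval b m v * Tinvval b (m - 1) v * Tinvval b (m + 1) v)" .
      have "1 + ev ?g (Yval b m v) = 1 * 1 + Mexpr X h Tval b m v * Tinvval b (m - 1) v * Tinvval b (m + 1) v"
        using vb b0 m1 by (simp add: Yval_def phi_img_def)
      then show ?thesis using cg_sym[OF c] by simp
    qed
  qed
  also have "Mexpr X h (\<lambda>b k v. Gf b k v * Tinvval b (k - 1) v * Tinvval b (k + 1) v) a m u
      = ?G * ?Mi (m - 1) * ?Mi (m + 1)"
  proof -
    have "Mexpr X h (\<lambda>b k v. Tinvval b (k - 1) v) a m u = ?Mi (m - 1)"
      using Mexpr_level[of X h "\<lambda>b k v. Tinvval b (k - 1) v" a m u 0]
        Mexpr_level[of X h Tinvval a "m - 1" u 0] by simp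
    moreover have "Mexpr X h (\<lambda>b k v. Tinvval b (k + 1) v) a m u = ?Mi (m + 1)"
      using Mexpr_level[of X h "\<lambda>b k v. Tinvval b (k + 1) v" a m u 0]
        Mexpr_level[of X h Tinvval a "m + 1" u 0] by simp
    ultimately show ?thesis by (simp add: Mexpr_mult)
  qed
  finally have N: "cg RT' (ev ?g (Mexpr X h (\<lambda>b k v. 1 + Yval b k v) a m u)) (?G * ?Mi (m - 1) * ?Mi (m + 1))" .
  have "ev ?g (Mexpr X h (\<lambda>b k v. 1 + Yval b k v) a m u * Yfac a (m - 1) u * Yfac a (m + 1) u)
     = ev ?g (Mexpr X h (\<lambda>b k v. 1 + Yval b k v) a m u) * ?F (m - 1) * ?F (m + 1)"
    by (simp add: ev_mult)
  also have "cg RT' \<dots> (?G * ?Mi (m - 1) * ?Mi (m + 1) * ?F (m - 1) * ?F (m + 1))"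
    using N by (intro cg_multR)
  also have "\<dots> = ?G * (?F (m - 1) * ?Mi (m - 1)) * (?F (m + 1) * ?Mi (m + 1))"
    by (simp add: algebra_simps)
  also have "cg RT' \<dots> (?G * ?J (m - 1) * ?J (m + 1))"
    by (rule cg_mult[OF cg_mult[OF cg_refl F_Mi[OF aI]] F_Mi[OF aI]])
  finally have Rr: "cg RT' (ev ?g (Mexpr X h (\<lambda>b k v. 1 + Yval b k v) a m u * Yfac a (m - 1) u * Yfac a (m + 1) u))
     (?G * ?J (m - 1) * ?J (m + 1))" .
  show "cg RT' (ev ?g (var (YG a m (u - 1)) * var (YG a m (u + 1))))
     (ev ?g (Mexpr X h (\<lambda>b k v. 1 + Yval b k v) a m u * Yfac a (m - 1) u * Yfac a (m + 1) u))"
    using L Rr cg_sym cg_trans by blast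
qed

end


definition cc :: "complex \<Rightarrow> complex" where "cc h = 2 * pi * \<i> / h"

definition grp :: "complex \<Rightarrow> complex set" where
  "grp h = {of_int n + of_rat q * cc h | n q. True}"

lemma grp_0: "0 \<in> grp h" unfolding grp_def by (rule CollectI, rule exI[of _ 0], rule exI[of _ 0]) simp

lemma grp_add: "x \<in> grp h \<Longrightarrow> y \<in> grp h \<Longrightarrow> x + y \<in> grp h"
  unfolding grp_def
  by (clarsimp, rule_tac x="n + na" in exI, rule_tac x="q + qa" in exI) (simp add: algebra_simps of_rat_add)

lemma grp_neg: "x \<in> grp h \<Longrightarrow> - x \<in> grp h"
  unfolding grp_def
  by (clarsimp, rule_tac x="- n" in exI, rule_tac x="- q" in exI) (simp add: algebra_simps of_rat_minus)

definition rep :: "complex \<Rightarrow> complex \<Rightarrow> complex" where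
  "rep h u = (SOME w. u - w \<in> grp h)"

lemma rep_in: "u - rep h u \<in> grp h"
  unfolding rep_def by (rule someI[of _ u]) (simp add: grp_0)

lemma rep_shift: assumes "x \<in> grp h" shows "rep h (u + x) = rep h u"
proof -
  have "(u + x - w \<in> grp h) = (u - w \<in> grp h)" for w
  proof
    assume "u + x - w \<in> grp h"
    from grp_add[OF this grp_neg[OF assms]] show "u - w \<in> grp h" by (simp add: algebra_simps)
  next
    assume "u - w \<in> grp h"
    from grp_add[OF this assms] show "u + x - w \<in> grp h" by (simp add: algebra_simps)
  qed
  then show ?thesis unfolding rep_def by simp
qed

definition tau :: "complex \<Rightarrow> complex \<Rightarrow> int" where
  "tau h u = (SOME n. \<exists>q. u - rep h u = of_int n + of_rat q * cc h)"

context
  fixes h :: complex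
  assumes irr: "\<forall>q\<in>\<rat>. h \<noteq> 2 * pi * \<i> * q"
begin

lemma h_nz: "h \<noteq> 0" using irr by (metis Rats_0 mult_zero_right)

lemma grp_unique:
  assumes "of_int n + of_rat q * cc h = of_int n' + of_rat q' * cc h"
  shows "n = n'"
proof (rule ccontr)
  assume nn: "n \<noteq> n'"
  have cc0: "cc h \<noteq> 0" using h_nz by (simp add: cc_def)
  have qq: "q \<noteq> q'"
  proof
    assume "q = q'" then show False using assms nn by simp
  qed
  have "of_rat (q - q') * cc h = of_int (n' - n)" using assms by (simp add: of_rat_diff algebra_simps)
  moreover have "(of_int (n' - n) :: complex) = of_rat (of_int (n' - n))" by (rule of_rat_of_int_eq[symmetric])
  ultimately have "of_rat (q - q') * cc h = of_rat (of_int (n' - n))" by simp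
  then have e: "cc h = of_rat (of_int (n' - n) / (q - q'))"
    using qq by (simp add: of_rat_divide field_simps del: of_rat_of_int_eq)
  define r where "r = of_int (n' - n) / (q - q')"
  have r0: "r \<noteq> 0" using nn qq by (simp add: r_def)
  have "h = 2 * pi * \<i> * of_rat (1 / r)"
    using e h_nz r0 unfolding r_def[symmetric] cc_def by (auto simp: of_rat_divide field_simps)
  moreover have "(of_rat (1 / r) :: complex) \<in> \<rat>" by (rule Rats_of_rat)
  ultimately show False using irr by blast
qed

lemma tau_eq: assumes "u - rep h u = of_int n + of_rat q * cc h" shows "tau h u = n"
proof -
  have "\<exists>q. u - rep h u = of_int (tau h u) + of_rat q * cc h"
    unfolding tau_def by (rule someI_ex) (use assms in blast)
  then obtain q' where "u - rep h u = of_int (tau h u) + of_rat q' * cc h" by blast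
  with assms show ?thesis using grp_unique by metis
qed

lemma tau_ex: "\<exists>q. u - rep h u = of_int (tau h u) + of_rat q * cc h"
proof -
  obtain n q where "u - rep h u = of_int n + of_rat q * cc h" using rep_in[of u h] unfolding grp_def by blast
  then show ?thesis using tau_eq by blast
qed

lemma tau_add_grp:
  assumes "of_int k + of_rat s * cc h = x"
  shows "tau h (u + x) = tau h u + k"
proof -
  have xg: "x \<in> grp h" using assms unfolding grp_def by blast
  obtain q where q: "u - rep h u = of_int (tau h u) + of_rat q * cc h" using tau_ex by blast
  have "u + x - rep h (u + x) = of_int (tau h u + k) + of_rat (q + s) * cc h"
  proof -
    have "u + x - rep h (u + x) = (u - rep h u) + x" by (simp add: rep_shift[OF xg])
    also have "\<dots> = of_int (tau h u + k) + of_rat (q + s) * cc h"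
      using q assms[symmetric] by (simp add: of_rat_add algebra_simps)
    finally show ?thesis .
  qed
  then show ?thesis by (rule tau_eq)
qed

lemma tau_p1: "tau h (u + 1) = tau h u + 1"
  using tau_add_grp[of 1 0 1 u] by simp

lemma tau_m1: "tau h (u - 1) = tau h u - 1"
  using tau_add_grp[of "-1" 0 "-1" u] by simp

lemma tau_rat: "tau h (u + of_rat s * cc h) = tau h u"
  using tau_add_grp[of 0 s "of_rat s * cc h" u] by simp

lemma tau_Omega: "tau h (u + Omega X h) = tau h u" "tau h (u - Omega X h) = tau h u"
proof -
  have "Omega X h = of_rat (1 / of_nat (kappa X)) * cc h"
    by (simp add: Omega_def cc_def of_rat_divide field_simps)
  moreover have "- Omega X h = of_rat (- (1 / of_nat (kappa X))) * cc h"
    by (simp add: Omega_def cc_def of_rat_divide of_rat_minus field_simps)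
  ultimately show "tau h (u + Omega X h) = tau h u" "tau h (u - Omega X h) = tau h u"
    using tau_rat[of u] tau_rat[of u "- (1 / of_nat (kappa X))"] by (simp_all add: diff_conv_add_uminus)
qed

lemma tau_period: "tau h (u + period X h b) = tau h u"
proof -
  have "period X h b = of_rat (1 / of_nat (kappa_a X b)) * cc h"
    by (simp add: period_def cc_def of_rat_divide field_simps)
  then show ?thesis using tau_rat by simp
qed

end


definition YN :: "twisted_type \<Rightarrow> complex \<Rightarrow> nat \<Rightarrow> nat \<Rightarrow> complex \<Rightarrow> ygen zpoly" where
  "YN X h a m v = var (YG a m (nrm (period X h a) v))"
definition YIN :: "twisted_type \<Rightarrow> complex \<Rightarrow> nat \<Rightarrow> nat \<Rightarrow> complex \<Rightarrow> ygen zpoly" where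
  "YIN X h a m v = var (YI a m (nrm (period X h a) v))"
definition YWN :: "twisted_type \<Rightarrow> complex \<Rightarrow> nat \<Rightarrow> nat \<Rightarrow> complex \<Rightarrow> ygen zpoly" where
  "YWN X h a m v = var (YW a m (nrm (period X h a) v))"

definition Cc :: "twisted_type \<Rightarrow> complex \<Rightarrow> nat \<Rightarrow> complex \<Rightarrow> ygen zpoly" where
  "Cc X h a u = (1 + YN X h a 1 u) * YIN X h a 1 u"
definition Ci :: "twisted_type \<Rightarrow> complex \<Rightarrow> nat \<Rightarrow> complex \<Rightarrow> ygen zpoly" where
  "Ci X h a u = YN X h a 1 u * YWN X h a 1 u"

type_synonym sl = "nat \<Rightarrow> complex \<Rightarrow> ygen zpoly \<times> ygen zpoly"

definition liftv :: "twisted_type \<Rightarrow> sl \<Rightarrow> nat \<Rightarrow> nat \<Rightarrow> complex \<Rightarrow> ygen zpoly" where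
  "liftv X S b k v = (if b = 0 then 1 else if b \<in> I_sigma X then fst (S b v) else 0)"
definition lifti :: "twisted_type \<Rightarrow> sl \<Rightarrow> nat \<Rightarrow> nat \<Rightarrow> complex \<Rightarrow> ygen zpoly" where
  "lifti X S b k v = (if b = 0 then 1 else if b \<in> I_sigma X then snd (S b v) else 0)"

definition fwd :: "twisted_type \<Rightarrow> complex \<Rightarrow> sl \<Rightarrow> sl \<Rightarrow> sl" where
  "fwd X h S0 S1 = (\<lambda>a u.
     (Mexpr X h (liftv X S1) a 1 (u - 1) * Cc X h a (u - 1) * snd (S0 a (u - 2)),
      Mexpr X h (lifti X S1) a 1 (u - 1) * Ci X h a (u - 1) * fst (S0 a (u - 2))))"
definition bwd :: "twisted_type \<Rightarrow> complex \<Rightarrow> sl \<Rightarrow> sl \<Rightarrow> sl" where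
  "bwd X h S1 S2 = (\<lambda>a u.
     (Mexpr X h (liftv X S1) a 1 (u + 1) * Cc X h a (u + 1) * snd (S2 a (u + 2)),
      Mexpr X h (lifti X S1) a 1 (u + 1) * Ci X h a (u + 1) * fst (S2 a (u + 2))))"

definition one_sl :: sl where "one_sl = (\<lambda>a u. (1, 1))"

primrec Pf :: "twisted_type \<Rightarrow> complex \<Rightarrow> nat \<Rightarrow> sl \<times> sl" where
  "Pf X h 0 = (one_sl, one_sl)"
| "Pf X h (Suc n) = (snd (Pf X h n), fwd X h (fst (Pf X h n)) (snd (Pf X h n)))"

primrec Qb :: "twisted_type \<Rightarrow> complex \<Rightarrow> nat \<Rightarrow> sl \<times> sl" where
  "Qb X h 0 = (one_sl, one_sl)"
| "Qb X h (Suc n) = (bwd X h (fst (Qb X h n)) (snd (Qb X h n)), fst (Qb X h n))"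

definition slice :: "twisted_type \<Rightarrow> complex \<Rightarrow> int \<Rightarrow> sl" where
  "slice X h t = (if 0 \<le> t then fst (Pf X h (nat t)) else fst (Qb X h (nat (- t))))"

definition Ul :: "twisted_type \<Rightarrow> complex \<Rightarrow> sl" where
  "Ul X h = (\<lambda>a u. slice X h (tau h u) a u)"

definition good :: "twisted_type \<Rightarrow> complex \<Rightarrow> sl \<Rightarrow> bool" where
  "good X h S \<longleftrightarrow> (\<forall>a\<in>I_sigma X. \<forall>u. cg (Yrels X h) (fst (S a u) * snd (S a u)) 1
                       \<and> S a (u + period X h a) = S a u)"

lemma slice_fwd: "t \<ge> 1 \<Longrightarrow> slice X h (t + 1) = fwd X h (slice X h (t - 1)) (slice X h t)"
proof -
  assume t: "t \<ge> 1"
  obtain n where n: "t = int n + 1" using t by (metis add.commute nat_int zle_iff_zadd add_diff_cancel_left')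
  have "fst (Pf X h (Suc (Suc n))) = fwd X h (fst (Pf X h n)) (fst (Pf X h (Suc n)))" by simp
  moreover have "nat (t + 1) = Suc (Suc n)" "nat (t - 1) = n" "nat t = Suc n" using n by auto
  ultimately show ?thesis using t by (simp add: slice_def)
qed

lemma natp1[simp]: "nat (int j + 1) = Suc j" by simp

lemma snd_Qb: "snd (Qb X h n) = slice X h (1 - int n)"
proof (cases n)
  case 0 then show ?thesis by (simp add: slice_def)
next
  case (Suc k)
  then show ?thesis
  proof (cases k)
    case 0 then show ?thesis using Suc by (simp add: slice_def)
  next
    case (Suc j)
    then show ?thesis using \<open>n = Suc k\<close> by (simp add: slice_def nat_diff_distrib)
  qed
qed

lemma slice_bwd: "t \<le> 0 \<Longrightarrow> slice X h (t - 1) = bwd X h (slice X h t) (slice X h (t + 1))"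
proof -
  assume t: "t \<le> 0"
  define n where "n = nat (- t)"
  have tn: "t = - int n" using t by (simp add: n_def)
  have "slice X h (t - 1) = fst (Qb X h (Suc n))" using tn by (simp add: slice_def nat_add_distrib)
  also have "\<dots> = bwd X h (fst (Qb X h n)) (snd (Qb X h n))" by simp
  also have "fst (Qb X h n) = slice X h t"
    using tn by (cases n) (auto simp: slice_def)
  also have "snd (Qb X h n) = slice X h (t + 1)" using tn by (simp add: snd_Qb)
  finally show ?thesis .
qed


context
  fixes X :: twisted_type and h :: complex
  assumes vX: "valid_twisted X" and irr: "\<forall>q\<in>\<rat>. h \<noteq> 2 * pi * \<i> * q"
begin

abbreviation "RY \<equiv> Yrels X h"

lemma h0: "h \<noteq> 0" using h_nz[OF irr] .

lemma YG_per: "cg RY (var (YG a m (v + period X h a))) (var (YG a m v))"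
proof -
  have "var (YG a m v) - var (YG a m (v + period X h a)) \<in> RY" unfolding Yrels_def by blast
  then show ?thesis by (rule cg_sym[OF cg_rel_eq])
qed
lemma YI_per: "cg RY (var (YI a m (v + period X h a))) (var (YI a m v))"
proof -
  have "var (YI a m v) - var (YI a m (v + period X h a)) \<in> RY" unfolding Yrels_def by blast
  then show ?thesis by (rule cg_sym[OF cg_rel_eq])
qed
lemma YW_per: "cg RY (var (YW a m (v + period X h a))) (var (YW a m v))"
proof -
  have "var (YW a m v) - var (YW a m (v + period X h a)) \<in> RY" unfolding Yrels_def by blast
  then show ?thesis by (rule cg_sym[OF cg_rel_eq])
qed

lemma YN_cg: "cg RY (YN X h a m v) (var (YG a m v))"
  unfolding YN_def by (rule cg_nrm[of RY "\<lambda>w. var (YG a m w)"]) (rule YG_per)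
lemma YIN_cg: "cg RY (YIN X h a m v) (var (YI a m v))"
  unfolding YIN_def by (rule cg_nrm[of RY "\<lambda>w. var (YI a m w)"]) (rule YI_per)
lemma YWN_cg: "cg RY (YWN X h a m v) (var (YW a m v))"
  unfolding YWN_def by (rule cg_nrm[of RY "\<lambda>w. var (YW a m w)"]) (rule YW_per)

lemma Y_inv: assumes "valid_idx X a m" shows "cg RY (var (YG a m u) * var (YI a m u)) 1"
proof (rule cg_rel_eq)
  have "var (YG a m u) * var (YI a m u) - 1 \<in> {var (YG a m u) * var (YI a m u) - 1 |a m u. valid_idx X a m}"
    using assms by blast
  then show "var (YG a m u) * var (YI a m u) - 1 \<in> RY" unfolding Yrels_def by (intro UnI1)
qed
lemma YW_inv: assumes "valid_idx X a m" shows "cg RY ((1 + var (YG a m u)) * var (YW a m u)) 1"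
proof (rule cg_rel_eq)
  have "(1 + var (YG a m u)) * var (YW a m u) - 1 \<in> {(1 + var (YG a m u)) * var (YW a m u) - 1 |a m u. valid_idx X a m}"
    using assms by blast
  then show "(1 + var (YG a m u)) * var (YW a m u) - 1 \<in> RY" unfolding Yrels_def by (intro UnI1 UnI2)
qed

lemma YN_inv: "valid_idx X a m \<Longrightarrow> cg RY (YN X h a m u * YIN X h a m u) 1"
  unfolding YN_def YIN_def by (rule Y_inv)
lemma YWN_inv: "valid_idx X a m \<Longrightarrow> cg RY ((1 + YN X h a m u) * YWN X h a m u) 1"
  unfolding YN_def YWN_def by (rule YW_inv)

lemma CcCi: "a \<in> I_sigma X \<Longrightarrow> cg RY (Cc X h a u * Ci X h a u) 1"
proof -
  assume "a \<in> I_sigma X"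
  then have v: "valid_idx X a 1" by (simp add: valid_idx_def)
  have "Cc X h a u * Ci X h a u = ((1 + YN X h a 1 u) * YWN X h a 1 u) * (YN X h a 1 u * YIN X h a 1 u)"
    by (simp add: Cc_def Ci_def algebra_simps)
  also have "cg RY \<dots> (1 * 1)" using YWN_inv[OF v] YN_inv[OF v] by (rule cg_mult)
  finally show ?thesis by simp
qed

lemma YN_per: "YN X h a m (u + period X h a) = YN X h a m u"
  "YIN X h a m (u + period X h a) = YIN X h a m u" "YWN X h a m (u + period X h a) = YWN X h a m u"
  by (simp_all add: YN_def YIN_def YWN_def nrm_per)

lemma Cc_per: "Cc X h a (u + period X h a) = Cc X h a u" "Ci X h a (u + period X h a) = Ci X h a u"
  by (simp_all add: Cc_def Ci_def YN_per)

lemma lift_per: "good X h S \<Longrightarrow> liftv X S b k (v + period X h b) = liftv X S b k v"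
  "good X h S \<Longrightarrow> lifti X S b k (v + period X h b) = lifti X S b k v"
  by (auto simp: good_def liftv_def lifti_def)

lemma Mexpr_lift_per: "good X h S \<Longrightarrow> a \<in> I_sigma X \<Longrightarrow>
   Mexpr X h (liftv X S) a m (u + period X h a) = Mexpr X h (liftv X S) a m u"
  "good X h S \<Longrightarrow> a \<in> I_sigma X \<Longrightarrow>
   Mexpr X h (lifti X S) a m (u + period X h a) = Mexpr X h (lifti X S) a m u"
  by (rule Mexpr_per[OF vX _ h0], assumption, erule lift_per)+

lemma Mv_Mi: "good X h S \<Longrightarrow> a \<in> I_sigma X \<Longrightarrow>
   cg RY (Mexpr X h (liftv X S) a m u * Mexpr X h (lifti X S) a m u) 1"
proof -
  assume g: "good X h S" and a: "a \<in> I_sigma X"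
  have "Mexpr X h (liftv X S) a m u * Mexpr X h (lifti X S) a m u
      = Mexpr X h (\<lambda>b k v. liftv X S b k v * lifti X S b k v) a m u" by (simp add: Mexpr_mult)
  also have "cg RY \<dots> (Mexpr X h (\<lambda>b k v. 1) a m u)"
  proof (rule cg_Mexpr_I[OF vX a])
    fix b v assume "b = 0 \<or> b \<in> I_sigma X"
    then show "cg RY (liftv X S b m v * lifti X S b m v) 1"
      using g by (auto simp: liftv_def lifti_def good_def)
  qed
  finally show ?thesis by (simp add: Mexpr_one)
qed

lemma shift_eq: "u + p - 1 = (u - 1) + p" "u + p - 2 = (u - 2) + p"
  "u + p + 1 = (u + 1) + p" "u + p + 2 = (u + 2) + p" for u p :: complex
  by (simp_all add: algebra_simps)

lemma fwd_good: "good X h S0 \<Longrightarrow> good X h S1 \<Longrightarrow> good X h (fwd X h S0 S1)"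
proof -
  assume g0: "good X h S0" and g1: "good X h S1"
  show ?thesis unfolding good_def
  proof (intro ballI allI conjI)
    fix a u assume a: "a \<in> I_sigma X"
    let ?M = "Mexpr X h (liftv X S1) a 1 (u - 1)" and ?Mi = "Mexpr X h (lifti X S1) a 1 (u - 1)"
    have "fst (fwd X h S0 S1 a u) * snd (fwd X h S0 S1 a u) =
      (?M * ?Mi) * (Cc X h a (u - 1) * Ci X h a (u - 1)) * (fst (S0 a (u - 2)) * snd (S0 a (u - 2)))"
      by (simp add: fwd_def algebra_simps)
    also have "cg RY \<dots> (1 * 1 * 1)"
      using Mv_Mi[OF g1 a] CcCi[OF a] g0 a unfolding good_def by (intro cg_mult) auto
    finally show "cg RY (fst (fwd X h S0 S1 a u) * snd (fwd X h S0 S1 a u)) 1" by simp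
    show "fwd X h S0 S1 a (u + period X h a) = fwd X h S0 S1 a u"
      using g0 a unfolding fwd_def shift_eq good_def
      by (simp add: Mexpr_lift_per[OF g1 a] Cc_per)
  qed
qed

lemma bwd_good: "good X h S1 \<Longrightarrow> good X h S2 \<Longrightarrow> good X h (bwd X h S1 S2)"
proof -
  assume g1: "good X h S1" and g2: "good X h S2"
  show ?thesis unfolding good_def
  proof (intro ballI allI conjI)
    fix a u assume a: "a \<in> I_sigma X"
    let ?M = "Mexpr X h (liftv X S1) a 1 (u + 1)" and ?Mi = "Mexpr X h (lifti X S1) a 1 (u + 1)"
    have "fst (bwd X h S1 S2 a u) * snd (bwd X h S1 S2 a u) =
      (?M * ?Mi) * (Cc X h a (u + 1) * Ci X h a (u + 1)) * (fst (S2 a (u + 2)) * snd (S2 a (u + 2)))"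
      by (simp add: bwd_def algebra_simps)
    also have "cg RY \<dots> (1 * 1 * 1)"
      using Mv_Mi[OF g1 a] CcCi[OF a] g2 a unfolding good_def by (intro cg_mult) auto
    finally show "cg RY (fst (bwd X h S1 S2 a u) * snd (bwd X h S1 S2 a u)) 1" by simp
    show "bwd X h S1 S2 a (u + period X h a) = bwd X h S1 S2 a u"
      using g2 a unfolding bwd_def shift_eq good_def
      by (simp add: Mexpr_lift_per[OF g1 a] Cc_per)
  qed
qed

lemma good_one: "good X h one_sl" by (simp add: good_def one_sl_def)

lemma Pf_good: "good X h (fst (Pf X h n)) \<and> good X h (snd (Pf X h n))"
  by (induction n) (auto simp: good_one fwd_good)

lemma Qb_good: "good X h (fst (Qb X h n)) \<and> good X h (snd (Qb X h n))"
  by (induction n) (auto simp: good_one bwd_good)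

lemma slice_good: "good X h (slice X h t)"
  using Pf_good Qb_good by (simp add: slice_def)

lemma Ul_good: "good X h (Ul X h)"
  unfolding good_def Ul_def
  using slice_good unfolding good_def by (simp add: tau_period[OF irr])

lemma liftv_Ul_local: "Mexpr X h (liftv X (slice X h (tau h w))) a m w = Mexpr X h (liftv X (Ul X h)) a m w"
  by (rule Mexpr_local) (simp_all add: liftv_def Ul_def tau_Omega[OF irr])

lemma E1:
  assumes a: "a \<in> I_sigma X"
  shows "cg RY (fst (Ul X h a (w - 1)) * fst (Ul X h a (w + 1))) (Mexpr X h (liftv X (Ul X h)) a 1 w * Cc X h a w)"
proof -
  let ?t = "tau h w"
  have tm: "tau h (w - 1) = ?t - 1" and tp: "tau h (w + 1) = ?t + 1"
    using tau_m1[OF irr] tau_p1[OF irr] by auto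
  have tp': "tau h (1 + w) = ?t + 1" using tp by (simp add: add.commute)
  let ?M = "Mexpr X h (liftv X (slice X h ?t)) a 1 w"
  have key: "?M = Mexpr X h (liftv X (Ul X h)) a 1 w" by (rule liftv_Ul_local)
  show ?thesis
  proof (cases "?t \<ge> 1")
    case True
    have u1: "Ul X h a (w + 1) = fwd X h (slice X h (?t - 1)) (slice X h ?t) a (w + 1)"
      using slice_fwd[OF True] by (simp only: Ul_def tp)
    have u0: "Ul X h a (w - 1) = slice X h (?t - 1) a (w - 1)" by (simp only: Ul_def tm)
    have "fst (Ul X h a (w - 1)) * fst (Ul X h a (w + 1)) =
       ?M * Cc X h a w * (fst (slice X h (?t - 1) a (w - 1)) * snd (slice X h (?t - 1) a (w - 1)))"
      unfolding u0 u1 by (simp add: fwd_def algebra_simps)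
    also have "cg RY \<dots> (?M * Cc X h a w * 1)"
      using slice_good[of "?t - 1"] a unfolding good_def by (intro cg_mult) auto
    finally show ?thesis by (simp only: key mult_1_right)
  next
    case False
    then have t0: "?t \<le> 0" by simp
    have u0: "Ul X h a (w - 1) = bwd X h (slice X h ?t) (slice X h (?t + 1)) a (w - 1)"
      using slice_bwd[OF t0] by (simp only: Ul_def tm)
    have u1: "Ul X h a (w + 1) = slice X h (?t + 1) a (w + 1)" by (simp only: Ul_def tp)
    have "fst (Ul X h a (w - 1)) * fst (Ul X h a (w + 1)) =
       ?M * Cc X h a w * (fst (slice X h (?t + 1) a (w + 1)) * snd (slice X h (?t + 1) a (w + 1)))"
      unfolding u0 u1 by (simp add: bwd_def algebra_simps)
    also have "cg RY \<dots> (?M * Cc X h a w * 1)"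
      using slice_good[of "?t + 1"] a unfolding good_def by (intro cg_mult) auto
    finally show ?thesis by (simp only: key mult_1_right)
  qed
qed

end


fun Lv :: "twisted_type \<Rightarrow> complex \<Rightarrow> nat \<Rightarrow> sl" where
  "Lv X h 0 = one_sl"
| "Lv X h (Suc 0) = Ul X h"
| "Lv X h (Suc (Suc m)) = (\<lambda>a u.
     (Mexpr X h (liftv X (Lv X h (Suc m))) a (Suc m) u * YIN X h a (Suc m) u * snd (Lv X h m a u),
      Mexpr X h (lifti X (Lv X h (Suc m))) a (Suc m) u * YN X h a (Suc m) u * fst (Lv X h m a u)))"

definition Tpsi :: "twisted_type \<Rightarrow> complex \<Rightarrow> nat \<Rightarrow> nat \<Rightarrow> complex \<Rightarrow> ygen zpoly" where
  "Tpsi X h b k v = (if b = 0 \<or> k = 0 then 1 else if b \<in> I_sigma X then fst (Lv X h k b v) else 0)"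
definition Tipsi :: "twisted_type \<Rightarrow> complex \<Rightarrow> nat \<Rightarrow> nat \<Rightarrow> complex \<Rightarrow> ygen zpoly" where
  "Tipsi X h b k v = (if b = 0 \<or> k = 0 then 1 else if b \<in> I_sigma X then snd (Lv X h k b v) else 0)"

context
  fixes X :: twisted_type and h :: complex
  assumes vX: "valid_twisted X" and irr: "\<forall>q\<in>\<rat>. h \<noteq> 2 * pi * \<i> * q"
begin

abbreviation "RY' \<equiv> Yrels X h"

lemma zI: "0 \<notin> I_sigma X" by (cases X) auto

lemma Lv_good2: "good X h (Lv X h m) \<and> good X h (Lv X h (Suc m))"
proof (induction m)
  case 0 then show ?case by (simp add: good_one[OF vX irr] Ul_good[OF vX irr])
next
  case (Suc m)
  have g0: "good X h (Lv X h m)" and g1: "good X h (Lv X h (Suc m))" using Suc by auto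
  have "good X h (Lv X h (Suc (Suc m)))" unfolding good_def
  proof (intro ballI allI conjI)
    fix a u assume a: "a \<in> I_sigma X"
    have va: "valid_idx X a (Suc m)" using a by (simp add: valid_idx_def)
    let ?M = "Mexpr X h (liftv X (Lv X h (Suc m))) a (Suc m) u"
    let ?Mi = "Mexpr X h (lifti X (Lv X h (Suc m))) a (Suc m) u"
    have "fst (Lv X h (Suc (Suc m)) a u) * snd (Lv X h (Suc (Suc m)) a u) =
       (?M * ?Mi) * (YN X h a (Suc m) u * YIN X h a (Suc m) u) * (fst (Lv X h m a u) * snd (Lv X h m a u))"
      by (simp add: algebra_simps)
    also have "cg RY' \<dots> (1 * 1 * 1)"
      using Mv_Mi[OF vX irr g1 a] YN_inv[OF vX irr va] g0 a unfolding good_def by (intro cg_mult) auto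
    finally show "cg RY' (fst (Lv X h (Suc (Suc m)) a u) * snd (Lv X h (Suc (Suc m)) a u)) 1" by simp
    show "Lv X h (Suc (Suc m)) a (u + period X h a) = Lv X h (Suc (Suc m)) a u"
      using g0 a unfolding good_def
      by (simp add: Mexpr_lift_per[OF vX irr g1 a] YN_per[OF vX irr])
  qed
  then show ?case using g1 by simp
qed

lemma Lv_good: "good X h (Lv X h m)" using Lv_good2 by blast

lemma Tpsi_lift: "1 \<le> k \<Longrightarrow> (\<lambda>b k' v. Tpsi X h b k v) = liftv X (Lv X h k)"
  "1 \<le> k \<Longrightarrow> (\<lambda>b k' v. Tipsi X h b k v) = lifti X (Lv X h k)"
  by (auto simp: Tpsi_def Tipsi_def liftv_def lifti_def fun_eq_iff)

lemma M_Tpsi: "1 \<le> k \<Longrightarrow> Mexpr X h (Tpsi X h) a k u = Mexpr X h (liftv X (Lv X h k)) a k u"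
  "1 \<le> k \<Longrightarrow> Mexpr X h (Tipsi X h) a k u = Mexpr X h (lifti X (Lv X h k)) a k u"
  by (subst Mexpr_level[where m'=k], simp add: Tpsi_lift)+

lemma M_Tpsi0: "Mexpr X h (Tpsi X h) a 0 u = 1" "Mexpr X h (Tipsi X h) a 0 u = 1"
proof -
  have "Mexpr X h (Tpsi X h) a 0 u = Mexpr X h (\<lambda>b k v. Tpsi X h b 0 v) a 0 u" by (rule Mexpr_level)
  then show "Mexpr X h (Tpsi X h) a 0 u = 1" by (simp add: Tpsi_def Mexpr_one)
  have "Mexpr X h (Tipsi X h) a 0 u = Mexpr X h (\<lambda>b k v. Tipsi X h b 0 v) a 0 u" by (rule Mexpr_level)
  then show "Mexpr X h (Tipsi X h) a 0 u = 1" by (simp add: Tipsi_def Mexpr_one)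
qed

lemma Tpsi_B:
  assumes "a \<in> I_sigma X" "1 \<le> m"
  shows "Tpsi X h a (m + 1) u = Mexpr X h (Tpsi X h) a m u * YIN X h a m u * Tipsi X h a (m - 1) u"
    "Tipsi X h a (m + 1) u = Mexpr X h (Tipsi X h) a m u * YN X h a m u * Tpsi X h a (m - 1) u"
proof -
  obtain k where k: "m = Suc k" using assms(2) by (cases m) auto
  have a0: "a \<noteq> 0" using assms(1) zI by metis
  show "Tpsi X h a (m + 1) u = Mexpr X h (Tpsi X h) a m u * YIN X h a m u * Tipsi X h a (m - 1) u"
    using assms a0 by (cases k) (simp_all add: k M_Tpsi Tpsi_def Tipsi_def one_sl_def)
  show "Tipsi X h a (m + 1) u = Mexpr X h (Tipsi X h) a m u * YN X h a m u * Tpsi X h a (m - 1) u"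
    using assms a0 by (cases k) (simp_all add: k M_Tpsi Tpsi_def Tipsi_def one_sl_def)
qed

lemma Tpsi_inv: "b = 0 \<or> b \<in> I_sigma X \<Longrightarrow> cg RY' (Tpsi X h b k v * Tipsi X h b k v) 1"
  using Lv_good[of k] by (auto simp: Tpsi_def Tipsi_def good_def)

lemma Mpsi_inv: "a \<in> I_sigma X \<Longrightarrow> cg RY' (Mexpr X h (Tpsi X h) a k u * Mexpr X h (Tipsi X h) a k u) 1"
proof -
  assume a: "a \<in> I_sigma X"
  have "Mexpr X h (Tpsi X h) a k u * Mexpr X h (Tipsi X h) a k u
      = Mexpr X h (\<lambda>b k v. Tpsi X h b k v * Tipsi X h b k v) a k u" by (simp add: Mexpr_mult)
  also have "cg RY' \<dots> (Mexpr X h (\<lambda>b k v. 1) a k u)"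
    by (rule cg_Mexpr_I[OF vX a]) (rule Tpsi_inv)
  finally show ?thesis by (simp add: Mexpr_one)
qed

lemma Tpsi_per: "Tpsi X h b k (v + period X h b) = Tpsi X h b k v"
  "Tipsi X h b k (v + period X h b) = Tipsi X h b k v"
  using Lv_good[of k] by (auto simp: Tpsi_def Tipsi_def good_def)

definition Em :: "nat \<Rightarrow> nat \<Rightarrow> complex \<Rightarrow> bool" where
  "Em m a u \<longleftrightarrow> cg RY' (Tpsi X h a m (u - 1) * Tpsi X h a m (u + 1))
        (Mexpr X h (Tpsi X h) a m u * ((1 + var (YG a m u)) * var (YI a m u)))"

lemma E_1: "a \<in> I_sigma X \<Longrightarrow> Em 1 a u"
proof -
  assume a: "a \<in> I_sigma X"
  have a0: "a \<noteq> 0" using a zI by metis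
  have "cg RY' (Tpsi X h a 1 (u - 1) * Tpsi X h a 1 (u + 1)) (Mexpr X h (Tpsi X h) a 1 u * Cc X h a u)"
    using E1[OF vX irr a, of u] a a0 by (simp add: Tpsi_def M_Tpsi)
  also have "cg RY' \<dots> (Mexpr X h (Tpsi X h) a 1 u * ((1 + var (YG a 1 u)) * var (YI a 1 u)))"
    unfolding Cc_def using YN_cg[OF vX irr] YIN_cg[OF vX irr]
    by (intro cg_mult cg_add) auto
  finally show ?thesis by (simp add: Em_def)
qed

end


lemma Mexpr_m1g: "Mexpr X h f a m (u - 1) = Mexpr X h (\<lambda>b k v. f b k (v - 1)) a m u"
  using Mexpr_shift[of X h f a m u "-1"] by simp

lemma Mexpr_lvl: "Mexpr X h (\<lambda>b k v. f b (k - 1) v) a m u = Mexpr X h f a (m - 1) u"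
  "Mexpr X h (\<lambda>b k v. f b (k + 1) v) a m u = Mexpr X h f a (m + 1) u"
  using Mexpr_level[of X h "\<lambda>b k v. f b (k - 1) v" a m u 0] Mexpr_level[of X h f a "m - 1" u 0]
    Mexpr_level[of X h "\<lambda>b k v. f b (k + 1) v" a m u 0] Mexpr_level[of X h f a "m + 1" u 0]
  by simp_all

context
  fixes X :: twisted_type and h :: complex
  assumes vX: "valid_twisted X" and irr: "\<forall>q\<in>\<rat>. h \<noteq> 2 * pi * \<i> * q"
begin

lemmas Emd = Em_def[OF vX irr]

abbreviation "R3 \<equiv> Yrels X h"
abbreviation "T \<equiv> Tpsi X h"
abbreviation "Ti \<equiv> Tipsi X h"

lemma Yrel9:
  assumes "valid_idx X a m"
  shows "cg R3 (var (YG a m (u - 1)) * var (YG a m (u + 1)))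
     (Mexpr X h (\<lambda>b k v. 1 + Yval b k v) a m u * Yfac a (m - 1) u * Yfac a (m + 1) u)"
proof (rule cg_rel_eq)
  let ?S = "{var (YG a m (u - 1)) * var (YG a m (u + 1))
        - Mexpr X h (\<lambda>b k v. 1 + Yval b k v) a m u * Yfac a (m - 1) u * Yfac a (m + 1) u
        | a m u. valid_idx X a m}"
  have "?S \<subseteq> R3" unfolding Yrels_def by (rule Un_upper2)
  moreover have "var (YG a m (u - 1)) * var (YG a m (u + 1))
        - Mexpr X h (\<lambda>b k v. 1 + Yval b k v) a m u * Yfac a (m - 1) u * Yfac a (m + 1) u \<in> ?S"
    using assms by blast
  ultimately show "var (YG a m (u - 1)) * var (YG a m (u + 1))
        - Mexpr X h (\<lambda>b k v. 1 + Yval b k v) a m u * Yfac a (m - 1) u * Yfac a (m + 1) u \<in> R3" by blast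
qed

lemma E_step:
  assumes a: "a \<in> I_sigma X" and m1: "1 \<le> m"
    and IH: "\<And>b v. b \<in> I_sigma X \<Longrightarrow> Em X h m b v"
    and IH1: "m = 1 \<or> Em X h (m - 1) a u"
  shows "Em X h (m + 1) a u"
proof -
  let ?MT = "\<lambda>k w. Mexpr X h T a k w"
  have a0: "a \<noteq> 0" using a zI[OF vX irr] by metis
  have va: "valid_idx X a m" using a m1 by (simp add: valid_idx_def)
  have va1: "valid_idx X a (m + 1)" using a by (simp add: valid_idx_def)
  let ?N = "Mexpr X h (\<lambda>b k v. 1 + Yval b k v) a m u"
  let ?YIN = "YIN X h a m (u - 1) * YIN X h a m (u + 1)"
  let ?J = "Ti a (m - 1) (u - 1) * Ti a (m - 1) (u + 1)"
  let ?W = "(1 + var (YG a (m + 1) u)) * var (YI a (m + 1) u)"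
  have e0: "T a (m + 1) (u - 1) * T a (m + 1) (u + 1) =
      (?MT m (u - 1) * ?MT m (u + 1)) * ?YIN * ?J"
    using Tpsi_B[OF vX irr a m1] by (simp add: algebra_simps)
  have e1: "?MT m (u - 1) * ?MT m (u + 1) = Mexpr X h (\<lambda>b k v. T b k (v - 1) * T b k (v + 1)) a m u"
    by (simp add: Mexpr_m1g Mexpr_shift Mexpr_mult)
  have c1: "cg R3 (Mexpr X h (\<lambda>b k v. T b k (v - 1) * T b k (v + 1)) a m u)
     (Mexpr X h (\<lambda>b k v. T b (k - 1) v * T b (k + 1) v * (1 + Yval b k v)) a m u)"
  proof (rule cg_Mexpr_I[OF vX a])
    fix b v assume "b = 0 \<or> b \<in> I_sigma X"
    then show "cg R3 (T b m (v - 1) * T b m (v + 1)) (T b (m - 1) v * T b (m + 1) v * (1 + Yval b m v))"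
    proof
      assume "b = 0" then show ?thesis by (simp add: Tpsi_def Yval_def)
    next
      assume bI: "b \<in> I_sigma X"
      have b0: "b \<noteq> 0" using bI zI[OF vX irr] by metis
      have "cg R3 (T b m (v - 1) * T b m (v + 1))
           (Mexpr X h T b m v * ((1 + var (YG b m v)) * var (YI b m v)))"
        using IH[OF bI, of v] by (simp add: Emd)
      also have "cg R3 \<dots> (Mexpr X h T b m v * ((1 + var (YG b m v)) * YIN X h b m v)
           * (T b (m - 1) v * Ti b (m - 1) v))"
      proof -
        have "cg R3 (Mexpr X h T b m v * ((1 + var (YG b m v)) * YIN X h b m v)
           * (T b (m - 1) v * Ti b (m - 1) v)) (Mexpr X h T b m v * ((1 + var (YG b m v)) * var (YI b m v)) * 1)"
          using bI by (intro cg_mult[OF cg_multL[OF cg_multL[OF YIN_cg[OF vX irr]]] Tpsi_inv[OF vX irr]]) auto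
        then show ?thesis by (simp add: cg_sym)
      qed
      also have "\<dots> = T b (m - 1) v * T b (m + 1) v * (1 + Yval b m v)"
        using Tpsi_B[OF vX irr bI m1] b0 m1 by (simp add: Yval_def algebra_simps)
      finally show ?thesis .
    qed
  qed
  have e2: "Mexpr X h (\<lambda>b k v. T b (k - 1) v * T b (k + 1) v * (1 + Yval b k v)) a m u
       = ?MT (m - 1) u * ?MT (m + 1) u * ?N"
  proof -
    have l1: "Mexpr X h (\<lambda>b k v. T b (k - 1) v) a m u = ?MT (m - 1) u" by (rule Mexpr_lvl(1))
    have l2: "Mexpr X h (\<lambda>b k v. T b (k + 1) v) a m u = ?MT (m + 1) u" by (rule Mexpr_lvl(2))
    have "Mexpr X h (\<lambda>b k v. T b (k - 1) v * T b (k + 1) v * (1 + Yval b k v)) a m u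
       = Mexpr X h (\<lambda>b k v. T b (k - 1) v) a m u * Mexpr X h (\<lambda>b k v. T b (k + 1) v) a m u * ?N"
      by (simp only: Mexpr_mult)
    then show ?thesis by (simp only: l1 l2)
  qed
  have c3: "cg R3 (?J * ?MT (m - 1) u) (Yfac a (m - 1) u)"
  proof (cases "m = 1")
    case True then show ?thesis by (simp add: Tipsi_def M_Tpsi0[OF vX irr] Yfac_def)
  next
    case False
    then have E: "Em X h (m - 1) a u" using IH1 by simp
    have vm1: "valid_idx X a (m - 1)" using a m1 False by (simp add: valid_idx_def)
    have "?J * ?MT (m - 1) u = ?J * ?MT (m - 1) u * 1" by simp
    also have "cg R3 \<dots> (?J * ?MT (m - 1) u *
        (((1 + var (YG a (m - 1) u)) * var (YW a (m - 1) u)) * (var (YG a (m - 1) u) * var (YI a (m - 1) u))))"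
    proof -
      have w: "cg R3 (((1 + var (YG a (m - 1) u)) * var (YW a (m - 1) u)) * (var (YG a (m - 1) u) * var (YI a (m - 1) u))) (1 * 1)"
        by (rule cg_mult[OF YW_inv[OF vX irr vm1] Y_inv[OF vX irr vm1]])
      show ?thesis by (rule cg_multL, rule cg_sym) (use w in simp)
    qed
    also have "\<dots> = ?J * (?MT (m - 1) u * ((1 + var (YG a (m - 1) u)) * var (YI a (m - 1) u)))
        * Yfac a (m - 1) u"
      using False m1 by (simp add: Yfac_def algebra_simps)
    also have "cg R3 \<dots> (?J * (T a (m - 1) (u - 1) * T a (m - 1) (u + 1)) * Yfac a (m - 1) u)"
      using E unfolding Emd by (intro cg_multR cg_multL) (rule cg_sym)
    also have "\<dots> = (T a (m - 1) (u - 1) * Ti a (m - 1) (u - 1)) * (T a (m - 1) (u + 1) * Ti a (m - 1) (u + 1))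
        * Yfac a (m - 1) u" by (simp add: algebra_simps)
    also have "cg R3 \<dots> (1 * 1 * Yfac a (m - 1) u)"
      using Tpsi_inv[OF vX irr] a by (intro cg_mult) auto
    finally show ?thesis by simp
  qed
  have c4: "cg R3 (Yfac a (m + 1) u * ?W) 1"
  proof -
    have "Yfac a (m + 1) u * ?W = ((1 + var (YG a (m + 1) u)) * var (YW a (m + 1) u))
       * (var (YG a (m + 1) u) * var (YI a (m + 1) u))"
      by (simp add: Yfac_def algebra_simps)
    also have "cg R3 \<dots> (1 * 1)"
      using YW_inv[OF vX irr va1] Y_inv[OF vX irr va1] by (rule cg_mult)
    finally show ?thesis by simp
  qed
  have c5: "cg R3 (?YIN * (var (YG a m (u - 1)) * var (YG a m (u + 1)))) 1"
  proof -
    have "?YIN * (var (YG a m (u - 1)) * var (YG a m (u + 1))) =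
       (var (YG a m (u - 1)) * YIN X h a m (u - 1)) * (var (YG a m (u + 1)) * YIN X h a m (u + 1))"
      by (simp add: algebra_simps)
    also have "cg R3 \<dots> ((var (YG a m (u - 1)) * var (YI a m (u - 1))) * (var (YG a m (u + 1)) * var (YI a m (u + 1))))"
      using YIN_cg[OF vX irr] by (intro cg_mult cg_refl)
    also have "cg R3 \<dots> (1 * 1)"
      by (rule cg_mult[OF Y_inv[OF vX irr va] Y_inv[OF vX irr va]])
    finally show ?thesis by simp
  qed
  have "cg R3 (T a (m + 1) (u - 1) * T a (m + 1) (u + 1))
      ((?MT (m - 1) u * ?MT (m + 1) u * ?N) * ?YIN * ?J)"
    unfolding e0 e1 e2[symmetric] by (intro cg_multR c1)
  also have "(?MT (m - 1) u * ?MT (m + 1) u * ?N) * ?YIN * ?J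
      = ?MT (m + 1) u * (?J * ?MT (m - 1) u) * ?N * ?YIN" by (simp add: algebra_simps)
  also have "cg R3 \<dots> (?MT (m + 1) u * Yfac a (m - 1) u * ?N * ?YIN)"
    using c3 by (intro cg_multR cg_multL)
  also have "\<dots> = ?MT (m + 1) u * Yfac a (m - 1) u * ?N * ?YIN * 1" by simp
  also have "cg R3 \<dots> (?MT (m + 1) u * Yfac a (m - 1) u * ?N * ?YIN * (Yfac a (m + 1) u * ?W))"
    by (rule cg_multL, rule cg_sym, rule c4)
  also have "\<dots> = ?MT (m + 1) u * ?W * ?YIN * (?N * Yfac a (m - 1) u * Yfac a (m + 1) u)"
    by (simp add: algebra_simps)
  also have "cg R3 \<dots> (?MT (m + 1) u * ?W * ?YIN * (var (YG a m (u - 1)) * var (YG a m (u + 1))))"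
    by (rule cg_multL, rule cg_sym, rule Yrel9[OF va])
  also have "\<dots> = ?MT (m + 1) u * ?W * (?YIN * (var (YG a m (u - 1)) * var (YG a m (u + 1))))"
    by (simp add: algebra_simps)
  also have "cg R3 \<dots> (?MT (m + 1) u * ?W * 1)"
    using c5 by (intro cg_multL)
  finally show ?thesis by (simp add: Emd)
qed

lemma E_all0: "1 \<le> m \<Longrightarrow> \<forall>a u. a \<in> I_sigma X \<longrightarrow> Em X h m a u"
proof (induction m rule: less_induct)
  case (less m)
  show ?case
  proof (cases "m = 1")
    case True then show ?thesis using E_1[OF vX irr] by simp
  next
    case False
    then obtain k where k: "m = k + 1" "1 \<le> k" using less.prems(1) by (cases m) auto
    have "Em X h (k + 1) a u" if a: "a \<in> I_sigma X" for a u
    proof (rule E_step[OF a k(2)])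
      show "\<And>b v. b \<in> I_sigma X \<Longrightarrow> Em X h k b v" using less.IH k by auto
      show "k = 1 \<or> Em X h (k - 1) a u" using less.IH k a by (cases "k = 1") auto
    qed
    then show ?thesis using k by simp
  qed
qed

lemma E_all: "1 \<le> m \<Longrightarrow> a \<in> I_sigma X \<Longrightarrow> Em X h m a u"
  using E_all0 by blast

end


fun gpsi :: "twisted_type \<Rightarrow> complex \<Rightarrow> tgen \<Rightarrow> ygen zpoly" where
  "gpsi X h (TG a m u) = (if valid_idx X a m then fst (Lv X h m a u) else 0)"
| "gpsi X h (TI a m u) = (if valid_idx X a m then snd (Lv X h m a u) else 0)"

lemma ev_Tval: "ev (gpsi X h) (Tval b k v) = Tpsi X h b k v"
  by (auto simp: Tval_def Tpsi_def valid_idx_def)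
lemma ev_Tinvval: "ev (gpsi X h) (Tinvval b k v) = Tipsi X h b k v"
  by (auto simp: Tinvval_def Tipsi_def valid_idx_def)
lemma ev_MT: "ev (gpsi X h) (Mexpr X h Tval a m u) = Mexpr X h (Tpsi X h) a m u"
  by (subst Mexpr_hom[where F="ev (gpsi X h)"]) (simp_all add: ev_mult ev_Tval)
lemma ev_MTi: "ev (gpsi X h) (Mexpr X h Tinvval a m u) = Mexpr X h (Tipsi X h) a m u"
  by (subst Mexpr_hom[where F="ev (gpsi X h)"]) (simp_all add: ev_mult ev_Tinvval)

context
  fixes X :: twisted_type and h :: complex
  assumes vX: "valid_twisted X" and irr: "\<forall>q\<in>\<rat>. h \<noteq> 2 * pi * \<i> * q"
begin

abbreviation "R4 \<equiv> Yrels X h"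
abbreviation "T' \<equiv> Tpsi X h"
abbreviation "Ti' \<equiv> Tipsi X h"

lemma hnz: "h \<noteq> 0" using h_nz[OF irr] .

lemma killed: "\<not> valid_idx X a m \<Longrightarrow> cg R4 0 (var (YG a m u))"
  "\<not> valid_idx X a m \<Longrightarrow> cg R4 0 (var (YI a m u))"
  "\<not> valid_idx X a m \<Longrightarrow> cg R4 0 (var (YW a m u))"
proof -
  assume nv: "\<not> valid_idx X a m"
  have s: "{var (YG a m u) |a m u. \<not> valid_idx X a m} \<subseteq> R4"
    "{var (YI a m u) |a m u. \<not> valid_idx X a m} \<subseteq> R4"
    "{var (YW a m u) |a m u. \<not> valid_idx X a m} \<subseteq> R4"
    unfolding Yrels_def by auto
  have "var (YG a m u) \<in> {var (YG a m u) |a m u. \<not> valid_idx X a m}"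
    "var (YI a m u) \<in> {var (YI a m u) |a m u. \<not> valid_idx X a m}"
    "var (YW a m u) \<in> {var (YW a m u) |a m u. \<not> valid_idx X a m}"
    using nv by blast+
  then have "var (YG a m u) \<in> R4" "var (YI a m u) \<in> R4" "var (YW a m u) \<in> R4"
    using s by blast+
  then show "cg R4 0 (var (YG a m u))" "cg R4 0 (var (YI a m u))" "cg R4 0 (var (YW a m u))"
    by (auto intro!: cg_sym[OF cg_rel])
qed

lemma TT_M:
  assumes a: "a \<in> I_sigma X" and m1: "1 \<le> m"
  shows "cg R4 (T' a (m - 1) u * T' a (m + 1) u) (Mexpr X h T' a m u * var (YI a m u))"
proof -
  have "T' a (m - 1) u * T' a (m + 1) u = Mexpr X h T' a m u * YIN X h a m u * (T' a (m - 1) u * Ti' a (m - 1) u)"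
    using Tpsi_B[OF vX irr a m1] by (simp add: algebra_simps)
  also have "cg R4 \<dots> (Mexpr X h T' a m u * var (YI a m u) * 1)"
    using a by (intro cg_mult[OF cg_multL[OF YIN_cg[OF vX irr]] Tpsi_inv[OF vX irr]]) auto
  finally show ?thesis by simp
qed

lemma psi_rels: "r \<in> Trels X h \<Longrightarrow> ev (gpsi X h) r \<in> GI R4"
proof -
  assume r: "r \<in> Trels X h"
  have per: "Lv X h m a (u + period X h a) = Lv X h m a u" if "a \<in> I_sigma X" for a m u
    using Lv_good[OF vX irr, of m] that by (simp add: good_def)
  have inv: "cg R4 (fst (Lv X h m a u) * snd (Lv X h m a u)) 1" if "a \<in> I_sigma X" for a m u
    using Lv_good[OF vX irr, of m] that by (simp add: good_def)
  have tsys: "cg R4 (T' a m (u - 1) * T' a m (u + 1)) (T' a (m - 1) u * T' a (m + 1) u + Mexpr X h T' a m u)"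
    if v: "valid_idx X a m" for a m u
  proof -
    have a: "a \<in> I_sigma X" and m1: "1 \<le> m" using v by (auto simp: valid_idx_def)
    have "cg R4 (T' a m (u - 1) * T' a m (u + 1)) (Mexpr X h T' a m u * ((1 + var (YG a m u)) * var (YI a m u)))"
      using E_all[OF vX irr m1 a] by (simp add: Em_def[OF vX irr])
    also have "\<dots> = Mexpr X h T' a m u * var (YI a m u) + Mexpr X h T' a m u * (var (YG a m u) * var (YI a m u))"
      by (simp add: algebra_simps)
    also have "cg R4 \<dots> (Mexpr X h T' a m u * var (YI a m u) + Mexpr X h T' a m u * 1)"
      by (rule cg_add[OF cg_refl cg_multL[OF Y_inv[OF vX irr v]]])
    also have "cg R4 \<dots> (T' a (m - 1) u * T' a (m + 1) u + Mexpr X h T' a m u)"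
      using cg_sym[OF TT_M[OF a m1, of u]] by (intro cg_add) auto
    finally show ?thesis .
  qed
  show ?thesis using r unfolding Trels_def
  proof (elim UnE)
    assume "r \<in> {var (TG a m u) * var (TI a m u) - 1 |a m u. valid_idx X a m}"
    then obtain a m u where v: "valid_idx X a m" and rr: "r = var (TG a m u) * var (TI a m u) - 1" by blast
    have a: "a \<in> I_sigma X" using v by (simp add: valid_idx_def)
    have "cg R4 (ev (gpsi X h) (var (TG a m u) * var (TI a m u))) (ev (gpsi X h) 1)"
      using inv[OF a, of m u] v by (simp add: ev_mult)
    then show ?thesis unfolding rr by (rule ev_diff_GI)
  next
    assume "r \<in> {var (TG a m u) |a m u. \<not> valid_idx X a m}"
    then show ?thesis by (auto simp: Id_zero)
  next
    assume "r \<in> {var (TI a m u) |a m u. \<not> valid_idx X a m}"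
    then show ?thesis by (auto simp: Id_zero)
  next
    assume "r \<in> {var (TG a m u) - var (TG a m (u + period X h a)) |a m u. True}"
    then obtain a m u where "r = var (TG a m u) - var (TG a m (u + period X h a))" by blast
    then show ?thesis using per[of a m u] by (auto simp: ev_diff valid_idx_def Id_zero)
  next
    assume "r \<in> {var (TI a m u) - var (TI a m (u + period X h a)) |a m u. True}"
    then obtain a m u where "r = var (TI a m u) - var (TI a m (u + period X h a))" by blast
    then show ?thesis using per[of a m u] by (auto simp: ev_diff valid_idx_def Id_zero)
  next
    assume "r \<in> {Tval a m (u - 1) * Tval a m (u + 1)
        - (Tval a (m - 1) u * Tval a (m + 1) u + Mexpr X h Tval a m u) | a m u. valid_idx X a m}"
    then obtain a m u where v: "valid_idx X a m" and rr: "r = Tval a m (u - 1) * Tval a m (u + 1)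
        - (Tval a (m - 1) u * Tval a (m + 1) u + Mexpr X h Tval a m u)" by blast
    have "cg R4 (ev (gpsi X h) (Tval a m (u - 1) * Tval a m (u + 1)))
       (ev (gpsi X h) (Tval a (m - 1) u * Tval a (m + 1) u + Mexpr X h Tval a m u))"
      using tsys[OF v, of u] by (simp add: ev_mult ev_add ev_Tval ev_MT)
    then show ?thesis unfolding rr by (rule ev_diff_GI)
  qed
qed

lemma phi_rels: "r \<in> Yrels X h \<Longrightarrow> ev (gphi X h) r \<in> GI (Trels X h)"
  unfolding Yrels_def
proof (elim UnE)
  assume "r \<in> {var (YG a m u) * var (YI a m u) - 1 |a m u. valid_idx X a m}"
  then show ?thesis using R1[OF vX hnz] by blast
next
  assume "r \<in> {(1 + var (YG a m u)) * var (YW a m u) - 1 |a m u. valid_idx X a m}"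
  then show ?thesis using R2[OF vX hnz] by blast
next
  assume "r \<in> {var (YG a m u) |a m u. \<not> valid_idx X a m}"
  then show ?thesis by (auto simp: Id_zero)
next
  assume "r \<in> {var (YI a m u) |a m u. \<not> valid_idx X a m}"
  then show ?thesis by (auto simp: Id_zero)
next
  assume "r \<in> {var (YW a m u) |a m u. \<not> valid_idx X a m}"
  then show ?thesis by (auto simp: Id_zero)
next
  assume "r \<in> {var (YG a m u) - var (YG a m (u + period X h a)) |a m u. True}"
  then show ?thesis using R6[OF vX hnz] by blast
next
  assume "r \<in> {var (YI a m u) - var (YI a m (u + period X h a)) |a m u. True}"
  then show ?thesis using R7[OF vX hnz] by blast
next
  assume "r \<in> {var (YW a m u) - var (YW a m (u + period X h a)) |a m u. True}"
  then show ?thesis using R8[OF vX hnz] by blast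
next
  assume "r \<in> {var (YG a m (u - 1)) * var (YG a m (u + 1))
        - Mexpr X h (\<lambda>b k v. 1 + Yval b k v) a m u * Yfac a (m - 1) u * Yfac a (m + 1) u
        | a m u. valid_idx X a m}"
  then show ?thesis using R9[OF vX hnz] by blast
qed

end


context
  fixes X :: twisted_type and h :: complex
  assumes vX: "valid_twisted X" and irr: "\<forall>q\<in>\<rat>. h \<noteq> 2 * pi * \<i> * q"
begin

abbreviation "R5 \<equiv> Yrels X h"
abbreviation "T5 \<equiv> Tpsi X h"
abbreviation "Ti5 \<equiv> Tipsi X h"

lemma psi_phi: "cg R5 (ev (gpsi X h) (gphi X h v)) (var v)"
proof (cases v)
  case (YG a m u)
  show ?thesis
  proof (cases "valid_idx X a m")
    case True
    then have a: "a \<in> I_sigma X" and m1: "1 \<le> m" by (auto simp: valid_idx_def)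
    have "ev (gpsi X h) (gphi X h v) = Mexpr X h T5 a m u * Ti5 a (m - 1) u * Ti5 a (m + 1) u"
      using True YG by (simp add: phi_img_def ev_mult ev_MT ev_Tinvval)
    also have "\<dots> = (Mexpr X h T5 a m u * Mexpr X h Ti5 a m u) * (T5 a (m - 1) u * Ti5 a (m - 1) u) * YN X h a m u"
      using Tpsi_B(2)[OF vX irr a m1, of u] by (simp add: algebra_simps)
    also have "cg R5 \<dots> (1 * 1 * var (YG a m u))"
      using a by (intro cg_mult[OF cg_mult[OF Mpsi_inv[OF vX irr] Tpsi_inv[OF vX irr]] YN_cg[OF vX irr]]) auto
    finally show ?thesis using YG by simp
  next
    case False then show ?thesis using YG killed(1)[OF vX irr] by simp
  qed
next
  case (YI a m u)
  show ?thesis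
  proof (cases "valid_idx X a m")
    case True
    then have a: "a \<in> I_sigma X" and m1: "1 \<le> m" by (auto simp: valid_idx_def)
    have "ev (gpsi X h) (gphi X h v) = Mexpr X h Ti5 a m u * T5 a (m - 1) u * T5 a (m + 1) u"
      using True YI by (simp add: ev_mult ev_MTi ev_Tval)
    also have "\<dots> = (Mexpr X h T5 a m u * Mexpr X h Ti5 a m u) * (T5 a (m - 1) u * Ti5 a (m - 1) u) * YIN X h a m u"
      using Tpsi_B(1)[OF vX irr a m1, of u] by (simp add: algebra_simps)
    also have "cg R5 \<dots> (1 * 1 * var (YI a m u))"
      using a by (intro cg_mult[OF cg_mult[OF Mpsi_inv[OF vX irr] Tpsi_inv[OF vX irr]] YIN_cg[OF vX irr]]) auto
    finally show ?thesis using YI by simp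
  next
    case False then show ?thesis using YI killed(2)[OF vX irr] by simp
  qed
next
  case (YW a m u)
  show ?thesis
  proof (cases "valid_idx X a m")
    case True
    then have a: "a \<in> I_sigma X" and m1: "1 \<le> m" by (auto simp: valid_idx_def)
    let ?M = "Mexpr X h T5 a m u"
    let ?J = "Ti5 a m (u - 1) * Ti5 a m (u + 1)"
    have "ev (gpsi X h) (gphi X h v) = (T5 a (m - 1) u * T5 a (m + 1) u) * ?J"
      using True YW by (simp add: ev_mult ev_Tval ev_Tinvval algebra_simps)
    also have "cg R5 \<dots> (?M * var (YI a m u) * ?J)"
      by (rule cg_multR[OF TT_M[OF vX irr a m1]])
    finally have c1: "cg R5 (ev (gpsi X h) (gphi X h v)) (?M * var (YI a m u) * ?J)" .
    have "cg R5 (var (YW a m u) * ((T5 a m (u - 1) * Ti5 a m (u - 1)) * (T5 a m (u + 1) * Ti5 a m (u + 1))))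
       (var (YW a m u) * (1 * 1))"
      using a by (intro cg_multL cg_mult Tpsi_inv[OF vX irr]) auto
    then have c2: "cg R5 (var (YW a m u)) (var (YW a m u) * (T5 a m (u - 1) * T5 a m (u + 1)) * ?J)"
      by (simp add: cg_sym algebra_simps)
    have "cg R5 (var (YW a m u) * (T5 a m (u - 1) * T5 a m (u + 1)) * ?J)
       (var (YW a m u) * (?M * ((1 + var (YG a m u)) * var (YI a m u))) * ?J)"
      using E_all[OF vX irr m1 a, of u] by (intro cg_multR cg_multL) (simp add: Em_def[OF vX irr])
    also have "\<dots> = ((1 + var (YG a m u)) * var (YW a m u)) * (?M * var (YI a m u) * ?J)"
      by (simp add: algebra_simps)
    also have "cg R5 \<dots> (1 * (?M * var (YI a m u) * ?J))"
      by (rule cg_multR[OF YW_inv[OF vX irr True]])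
    finally have c3: "cg R5 (var (YW a m u) * (T5 a m (u - 1) * T5 a m (u + 1)) * ?J) (?M * var (YI a m u) * ?J)"
      by simp
    show ?thesis using YW c1 cg_trans[OF c2 c3] by (metis cg_sym cg_trans)
  next
    case False then show ?thesis using YW killed(3)[OF vX irr] by simp
  qed
qed

end

theorem theorem9p13:
  fixes X :: twisted_type and h :: complex
  assumes "valid_twisted X"
    and "\<forall>q\<in>\<rat>. h \<noteq> 2 * pi * \<i> * q"
  shows "\<exists>\<phi>. \<phi> \<in> ring_hom (Yring X h) (Tring X h)
          \<and> (\<forall>a m u. a \<in> I_sigma X \<and> 1 \<le> m \<longrightarrow>
                \<phi> (cls (Yrels X h) (var (YG a m u))) = cls (Trels X h) (phi_img X h a m u))
          \<and> (\<exists>\<psi>. \<psi> \<in> ring_hom (Tring X h) (Yring X h)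
                 \<and> (\<forall>x \<in> carrier (Yring X h). \<psi> (\<phi> x) = x))"
proof -
  note vX = assms(1) and irr = assms(2)
  have A: "\<forall>r\<in>Yrels X h. ev (gphi X h) r \<in> GI (Trels X h)" using phi_rels[OF vX irr] by blast
  have B: "\<forall>r\<in>Trels X h. ev (gpsi X h) r \<in> GI (Yrels X h)" using psi_rels[OF vX irr] by blast
  have C: "\<And>v. ev (gpsi X h) (gphi X h v) - var v \<in> GI (Yrels X h)"
    using psi_phi[OF vX irr] by (simp add: cg_def)
  let ?phi = "ind (Yrels X h) (Trels X h) (gphi X h)"
  let ?psi = "ind (Trels X h) (Yrels X h) (gpsi X h)"
  have h1: "?phi \<in> ring_hom (Yring X h) (Tring X h)"
    unfolding Yring_def Tring_def by (rule ind_hom[OF A])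
  have h2: "\<forall>a m u. a \<in> I_sigma X \<and> 1 \<le> m \<longrightarrow>
       ?phi (cls (Yrels X h) (var (YG a m u))) = cls (Trels X h) (phi_img X h a m u)"
    by (auto simp: ind_cls[OF A] valid_idx_def)
  have h3: "?psi \<in> ring_hom (Tring X h) (Yring X h)"
    unfolding Yring_def Tring_def by (rule ind_hom[OF B])
  have h4: "\<forall>x \<in> carrier (Yring X h). ?psi (?phi x) = x"
    unfolding Yring_def using ind_inverse[OF A B C] by blast
  show ?thesis using h1 h2 h3 h4 by blast
qed


end
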